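(* Let $X$ be a metric space and $x\in X$, and assume there exist constants $c\ge1$, $a\in(0,1]$ such that for all $r\le a$, $\lambda,\mu\le1$ and $y,z\in B_X(x,r)$, $n(\lambda\mu r,B_X(y,\lambda r))\le c\,n(\lambda\mu r,B_X(z,\lambda r))$. Let (C) denote the condition $\limsup_{r\to0}n_{\lambda r}(\overline{B}_X(x,r))<\infty$ for all $\lambda>0$. (i) If (C) holds, then $$\underline{\delta}_X(x)=\lim_{\lambda\to0}\liminf_{r\to0}\frac{\log n(\lambda r,B(x,r))}{\log1/\lambda},\qquad \overline{\delta}_X(x)=\lim_{\lambda\to0}\limsup_{r\to0}\frac{\log n(\lambda r,B(x,r))}{\log1/\lambda},$$ the limits in $\lambda$ existing. (ii) If (C) holds, then $\underline{\delta}_X(x)\le\underline{d}_X(x)\le\overline{d}_X(x)\le\overline{\delta}_X(x)$. (iii) Condition (C) is equivalent to $\overline{\delta}_X(x)<\infty$.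
   Context: $B(x,r)=B_X(x,r)$ is the open ball, $\overline{B}(x,r)$ the closed ball; $n(s,A)=n_s(A)$ is the minimum number of open balls of radius $s$ needed to cover $A$. Tangential dimensions: $\underline{\delta}_X(x)=\liminf_{\lambda\to0}\liminf_{r\to0}\frac{\log n(\lambda r,\overline{B}(x,r))}{\log1/\lambda}$, $\overline{\delta}_X(x)=\limsup_{\lambda\to0}\limsup_{r\to0}\frac{\log n(\lambda r,\overline{B}(x,r))}{\log1/\lambda}$. Local box dimensions: $\underline{d}_X(x)=\lim_{R\to0}\liminf_{r\to0}\frac{\log n(r,B_X(x,R))}{\log1/r}$, $\overline{d}_X(x)=\lim_{R\to0}\limsup_{r\to0}\frac{\log n(r,B_X(x,R))}{\log1/r}$. *)

theory Defs
  imports "HOL-Analysis.Analysis"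
begin

text \<open>Covering number n(s,A): least number of open balls of radius s (centres anywhere
  in the space) covering A; infinity if no finite cover exists.\<close>
definition covnum :: "real \<Rightarrow> 'a::metric_space set \<Rightarrow> enat" where
  "covnum s A = Inf {enat (card F) | F. finite F \<and> A \<subseteq> (\<Union>y\<in>F. ball y s)}"

definition elog :: "enat \<Rightarrow> ereal" where
  "elog n = (case n of enat k \<Rightarrow> ereal (ln (real k)) | \<infinity> \<Rightarrow> \<infinity>)"

definition lower_tangential_dim :: "'a::metric_space \<Rightarrow> ereal" where
  "lower_tangential_dim x = Liminf (at_right 0) (\<lambda>lam.
      Liminf (at_right 0) (\<lambda>r. elog (covnum (lam * r) (cball x r)) / ereal (ln (1 / lam))))"

definition upper_tangential_dim :: "'a::metric_space \<Rightarrow> ereal" where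
  "upper_tangential_dim x = Limsup (at_right 0) (\<lambda>lam.
      Limsup (at_right 0) (\<lambda>r. elog (covnum (lam * r) (cball x r)) / ereal (ln (1 / lam))))"

definition lower_box_dim :: "'a::metric_space \<Rightarrow> ereal" where
  "lower_box_dim x = Lim (at_right 0) (\<lambda>R.
      Liminf (at_right 0) (\<lambda>r. elog (covnum r (ball x R)) / ereal (ln (1 / r))))"

definition upper_box_dim :: "'a::metric_space \<Rightarrow> ereal" where
  "upper_box_dim x = Lim (at_right 0) (\<lambda>R.
      Limsup (at_right 0) (\<lambda>r. elog (covnum r (ball x R)) / ereal (ln (1 / r))))"

definition condC :: "'a::metric_space \<Rightarrow> bool" where
  "condC x \<longleftrightarrow> (\<forall>lam>0. Limsup (at_right 0) (\<lambda>r. ereal_of_enat (covnum (lam * r) (cball x r))) < \<infinity>)"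

end

theory Submission
  imports Defs "HOL-Analysis.Analysis"
begin

lemma covnum_mono_set: "A \<subseteq> B \<Longrightarrow> covnum s A \<le> covnum s B"
  unfolding covnum_def by (rule Inf_superset_mono) blast

lemma covnum_mono_rad: "s \<le> t \<Longrightarrow> covnum t A \<le> covnum s A"
  unfolding covnum_def
proof (rule Inf_superset_mono, safe)
  fix F assume "s \<le> t" "finite F" "A \<subseteq> (\<Union>y\<in>F. ball y s)"
  moreover have "(\<Union>y\<in>F. ball y s) \<subseteq> (\<Union>y\<in>F. ball y t)" using \<open>s \<le> t\<close> by auto
  ultimately show "\<exists>G. enat (card F) = enat (card G) \<and> finite G \<and> A \<subseteq> (\<Union>y\<in>G. ball y t)" by blast
qed

lemma covnum_le: "finite F \<Longrightarrow> A \<subseteq> (\<Union>y\<in>F. ball y s) \<Longrightarrow> covnum s A \<le> enat (card F)"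
  unfolding covnum_def by (rule Inf_lower) blast

lemma covnum_obtain:
  assumes "covnum s A = enat m"
  obtains F where "finite F" "card F = m" "A \<subseteq> (\<Union>y\<in>F. ball y s)"
proof -
  let ?S = "{enat (card F) | F. finite F \<and> A \<subseteq> (\<Union>y\<in>F. ball y s)}"
  have "?S \<noteq> {}" using assms unfolding covnum_def Inf_enat_def by (auto split: if_splits)
  then have "Inf ?S \<in> ?S" unfolding Inf_enat_def by (auto intro: LeastI)
  then show ?thesis using assms that unfolding covnum_def by auto
qed

lemma covnum_ge1: "A \<noteq> {} \<Longrightarrow> 1 \<le> covnum s A"
proof -
  assume ne: "A \<noteq> {}"
  have "1 \<le> enat (card F)" if "finite F" "A \<subseteq> (\<Union>y\<in>F. ball y s)" for F
  proof -
    have "F \<noteq> {}" using that ne by auto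
    then show ?thesis using that by (simp add: one_enat_def Suc_leI card_gt_0_iff)
  qed
  then show ?thesis unfolding covnum_def by (auto intro!: Inf_greatest)
qed

lemma covnum_Un: "covnum s (A \<union> B) \<le> covnum s A + covnum s B"
proof (cases "covnum s A = \<infinity> \<or> covnum s B = \<infinity>")
  case True then show ?thesis by auto
next
  case False
  then obtain m n where m: "covnum s A = enat m" and n: "covnum s B = enat n" by auto
  obtain F where F: "finite F" "card F = m" "A \<subseteq> (\<Union>y\<in>F. ball y s)" using covnum_obtain[OF m] .
  obtain G where G: "finite G" "card G = n" "B \<subseteq> (\<Union>y\<in>G. ball y s)" using covnum_obtain[OF n] .
  have "covnum s (A \<union> B) \<le> enat (card (F \<union> G))"
    by (rule covnum_le) (use F G in auto)
  also have "\<dots> \<le> enat (m + n)" using card_Un_le[of F G] F G by simp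
  finally show ?thesis using m n by simp
qed

lemma covnum_UN: "finite I \<Longrightarrow> covnum s (\<Union>i\<in>I. A i) \<le> (\<Sum>i\<in>I. covnum s (A i))"
proof (induction I rule: finite_induct)
  case empty
  show ?case using covnum_le[of "{}" "{}" s] by (simp add: zero_enat_def)
next
  case (insert i I)
  have "covnum s (\<Union>j\<in>insert i I. A j) = covnum s (A i \<union> (\<Union>j\<in>I. A j))" by simp
  also have "\<dots> \<le> covnum s (A i) + covnum s (\<Union>j\<in>I. A j)" by (rule covnum_Un)
  also have "\<dots> \<le> covnum s (A i) + (\<Sum>j\<in>I. covnum s (A j))" using insert by (simp add: add_left_mono)
  finally show ?case using insert by simp
qed

locale homx =
  fixes x :: "'a::metric_space" and c a :: real
  assumes c1: "c \<ge> 1" and a0: "0 < a" and a1: "a \<le> 1"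
    and hom: "\<And>r lam mu y z. 0 < r \<Longrightarrow> r \<le> a \<Longrightarrow> 0 < lam \<Longrightarrow> lam \<le> 1 \<Longrightarrow>
       0 < mu \<Longrightarrow> mu \<le> 1 \<Longrightarrow> y \<in> ball x r \<Longrightarrow> z \<in> ball x r \<Longrightarrow>
       ereal_of_enat (covnum (lam * mu * r) (ball y (lam * r)))
         \<le> ereal c * ereal_of_enat (covnum (lam * mu * r) (ball z (lam * r)))"
begin

lemma hom2:
  assumes "0 < rho" "rho \<le> s" "s \<le> R" "R \<le> a" "y \<in> ball x R" "z \<in> ball x R"
  shows "ereal_of_enat (covnum rho (ball y s)) \<le> ereal c * ereal_of_enat (covnum rho (ball z s))"
proof -
  have R0: "R > 0" using assms by auto
  have e1: "(s / R) * (rho / s) * R = rho" and e2: "(s / R) * R = s" using assms R0 by auto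
  show ?thesis using hom[of R "s/R" "rho/s" y z] assms R0 unfolding e1 e2 by auto
qed

lemma ub_step:
  assumes "0 < rho" "rho \<le> t" "2 * t \<le> R" "R \<le> a"
  shows "ereal_of_enat (covnum rho (ball x R))
    \<le> ereal c * ereal_of_enat (covnum t (ball x R)) * ereal_of_enat (covnum rho (ball x (2*t)))"
proof -
  have t0: "t > 0" and R0: "R > 0" using assms by auto
  have X1: "1 \<le> covnum rho (ball x (2*t))" by (rule covnum_ge1) (use t0 in auto)
  have M1: "1 \<le> covnum t (ball x R)" by (rule covnum_ge1) (use R0 in auto)
  have c0: "c > 0" using c1 by auto
  show ?thesis
  proof (cases "covnum t (ball x R)")
    case infinity
    have "ereal_of_enat (covnum rho (ball x (2*t))) > 0" using X1
      by (metis ereal_of_enat_gt_zero_cancel_iff less_le_trans zero_less_one)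
    then have "ereal c * \<infinity> * ereal_of_enat (covnum rho (ball x (2*t))) = \<infinity>"
      using c0 by (cases "ereal_of_enat (covnum rho (ball x (2*t)))") auto
    then show ?thesis by (simp only: infinity ereal_of_enat_simps) simp
  next
    case (enat m)
    obtain F where F: "finite F" "card F = m" "ball x R \<subseteq> (\<Union>w\<in>F. ball w t)"
      using covnum_obtain[OF enat] .
    define F' where "F' = {w\<in>F. ball w t \<inter> ball x R \<noteq> {}}"
    have F'F: "F' \<subseteq> F" and fF': "finite F'" using F unfolding F'_def by auto
    have cov: "ball x R \<subseteq> (\<Union>w\<in>F'. ball w t)" using F(3) unfolding F'_def by blast
    have each: "ereal_of_enat (covnum rho (ball w t)) \<le> ereal c * ereal_of_enat (covnum rho (ball x (2*t)))"
      if wF: "w \<in> F'" for w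
    proof -
      obtain y where y: "y \<in> ball w t" "y \<in> ball x R" using wF unfolding F'_def by blast
      have "ball w t \<subseteq> ball y (2*t)" using y(1)
        by (auto simp: dist_commute intro: le_less_trans[OF dist_triangle] )
          (smt (verit) dist_commute dist_triangle)
      then have "covnum rho (ball w t) \<le> covnum rho (ball y (2*t))" by (rule covnum_mono_set)
      then have "ereal_of_enat (covnum rho (ball w t)) \<le> ereal_of_enat (covnum rho (ball y (2*t)))" by simp
      also have "\<dots> \<le> ereal c * ereal_of_enat (covnum rho (ball x (2*t)))"
        by (rule hom2[of rho "2*t" R y x]) (use assms y R0 in auto)
      finally show ?thesis .
    qed
    have m1: "m \<ge> 1" using M1 enat by (simp add: one_enat_def)
    show ?thesis
    proof (cases "covnum rho (ball x (2*t))")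
      case infinity
      then show ?thesis using enat c0 m1 by simp
    next
      case (enat p)
      define q where "q = nat \<lfloor>c * p\<rfloor>"
      have qle: "real q \<le> c * p" unfolding q_def using c0 by simp
      have each2: "covnum rho (ball w t) \<le> enat q" if "w \<in> F'" for w
      proof -
        have h: "ereal_of_enat (covnum rho (ball w t)) \<le> ereal (c * p)" using each[OF that] enat by simp
        then obtain k where k: "covnum rho (ball w t) = enat k" by (cases "covnum rho (ball w t)") auto
        then have "real k \<le> c * p" using h by simp
        then have "k \<le> q" unfolding q_def by linarith
        then show ?thesis using k by simp
      qed
      have "covnum rho (ball x R) \<le> covnum rho (\<Union>w\<in>F'. ball w t)" by (rule covnum_mono_set[OF cov])
      also have "\<dots> \<le> (\<Sum>w\<in>F'. covnum rho (ball w t))" by (rule covnum_UN[OF fF'])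
      also have "\<dots> \<le> of_nat (card F') * enat q" by (rule sum_bounded_above) (rule each2)
      also have "\<dots> = enat (card F' * q)" by (simp add: of_nat_eq_enat)
      finally have "ereal_of_enat (covnum rho (ball x R)) \<le> ereal (real (card F' * q))" 
        by (metis ereal_of_enat_le_iff ereal_of_enat_simps(1))
      also have "\<dots> \<le> ereal (c * m * p)"
      proof -
        have "card F' \<le> m" using card_mono[OF F(1) F'F] F(2) by simp
        then have "real (card F') * real q \<le> real m * (c * p)"
          using qle by (intro mult_mono) auto
        then show ?thesis by (simp add: algebra_simps)
      qed
      finally show ?thesis using \<open>covnum t (ball x R) = enat m\<close> enat by simp
    qed
  qed
qed

end

lemma sep_exists:
  fixes B :: "'a::metric_space set"
  assumes "s > 0" "enat n \<le> covnum s B"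
  shows "\<exists>S\<subseteq>B. finite S \<and> card S = n \<and> (\<forall>p\<in>S. \<forall>q\<in>S. p \<noteq> q \<longrightarrow> s \<le> dist p q)"
  using assms(2)
proof (induction n)
  case 0 then show ?case by (intro exI[of _ "{}"]) auto
next
  case (Suc n)
  then have "enat n \<le> covnum s B" by (meson Suc_n_not_le_n enat_ord_simps(1) le_cases order.trans)
  then obtain S where S: "S \<subseteq> B" "finite S" "card S = n" "\<forall>p\<in>S. \<forall>q\<in>S. p \<noteq> q \<longrightarrow> s \<le> dist p q"
    using Suc.IH by blast
  have "\<not> B \<subseteq> (\<Union>p\<in>S. ball p s)"
  proof
    assume "B \<subseteq> (\<Union>p\<in>S. ball p s)"
    then have "covnum s B \<le> enat n" using covnum_le[OF S(2)] S(3) by simp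
    then show False using Suc.prems by (meson order_trans enat_ord_simps(1) Suc_n_not_le_n)
  qed
  then obtain b where b0: "b \<in> B" "b \<notin> (\<Union>p\<in>S. ball p s)" by blast
  then have b: "b \<in> B" "\<forall>p\<in>S. s \<le> dist p b" by (auto simp: not_less)
  have bS: "b \<notin> S" using b assms(1) by fastforce
  show ?case
    by (rule exI[of _ "insert b S"]) (use S b bS in \<open>auto simp: dist_commute\<close>)
qed

context homx begin

lemma lb_step:
  assumes "0 < rho" "rho \<le> t" "2 * t \<le> R" "R \<le> a" "enat n \<le> covnum (4*t) (ball x (R/2))"
  shows "ereal (real n) * ereal_of_enat (covnum rho (ball x t)) \<le> ereal c * ereal_of_enat (covnum rho (ball x R))"
proof -
  have t0: "t > 0" and R0: "R > 0" using assms by auto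
  have c0: "c > 0" using c1 by auto
  show ?thesis
  proof (cases "n = 0")
    case True then show ?thesis using c0 by (simp add: ereal_of_enat_nonneg zero_ereal_def[symmetric])
  next
    case nz: False
    show ?thesis
    proof (cases "covnum rho (ball x R)")
      case infinity
      then show ?thesis using c0 by simp
    next
      case (enat m)
      obtain F where F: "finite F" "card F = m" "ball x R \<subseteq> (\<Union>w\<in>F. ball w rho)"
        using covnum_obtain[OF enat] .
      obtain S where S: "S \<subseteq> ball x (R/2)" "finite S" "card S = n"
        "\<forall>p\<in>S. \<forall>q\<in>S. p \<noteq> q \<longrightarrow> 4*t \<le> dist p q"
        using sep_exists[OF _ assms(5)] t0 by auto
      define Fs where "Fs s = {w\<in>F. ball w rho \<inter> ball s t \<noteq> {}}" for s
      have FsF: "Fs s \<subseteq> F" for s unfolding Fs_def by auto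
      have fin: "finite (Fs s)" for s using F(1) FsF finite_subset by blast
      have sub: "ball s t \<subseteq> ball x R" if "s \<in> S" for s
      proof
        fix p assume "p \<in> ball s t"
        moreover have "dist x s < R/2" using S(1) that by auto
        ultimately show "p \<in> ball x R" using assms
          by simp (smt (verit) dist_triangle)
      qed
      have covs: "covnum rho (ball s t) \<le> enat (card (Fs s))" if "s \<in> S" for s
      proof (rule covnum_le[OF fin], rule subsetI)
        fix p assume p: "p \<in> ball s t"
        then have "p \<in> ball x R" using sub[OF that] by blast
        then obtain w where "w \<in> F" "p \<in> ball w rho" using F(3) by auto
        then show "p \<in> (\<Union>w\<in>Fs s. ball w rho)" using p unfolding Fs_def by blast
      qed
      have disj: "Fs s \<inter> Fs s' = {}" if "s \<in> S" "s' \<in> S" "s \<noteq> s'" for s s'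
      proof (rule ccontr)
        assume "Fs s \<inter> Fs s' \<noteq> {}"
        then obtain w p q where "p \<in> ball w rho" "p \<in> ball s t" "q \<in> ball w rho" "q \<in> ball s' t"
          unfolding Fs_def by blast
        then have "dist s s' < 4 * t" using assms(2)
          by simp (smt (verit) dist_commute dist_triangle)
        then show False using S(4) that by fastforce
      qed
      have sumle: "(\<Sum>s\<in>S. card (Fs s)) \<le> m"
      proof -
        have "(\<Sum>s\<in>S. card (Fs s)) = card (\<Union>s\<in>S. Fs s)"
          by (rule card_UN_disjoint[symmetric]) (use S(2) fin disj in auto)
        also have "\<dots> \<le> card F" by (rule card_mono[OF F(1)]) (use FsF in auto)
        finally show ?thesis using F(2) by simp
      qed
      have homs: "ereal_of_enat (covnum rho (ball x t)) \<le> ereal c * ereal (real (card (Fs s)))"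
        if "s \<in> S" for s
      proof -
        have "ereal_of_enat (covnum rho (ball x t)) \<le> ereal c * ereal_of_enat (covnum rho (ball s t))"
          by (rule hom2[of rho t R x s]) (use assms that S(1) R0 in auto)
        also have "\<dots> \<le> ereal c * ereal (real (card (Fs s)))"
          using covs[OF that] c0
          by (intro ereal_mult_left_mono) (metis ereal_of_enat_le_iff ereal_of_enat_simps(1), simp)
        finally show ?thesis .
      qed
      obtain s0 where s0: "s0 \<in> S" using nz S(3) by fastforce
      obtain k where k: "covnum rho (ball x t) = enat k"
        using homs[OF s0] by (cases "covnum rho (ball x t)") auto
      have kle: "real k \<le> c * real (card (Fs s))" if "s \<in> S" for s
        using homs[OF that] k by simp
      have "real n * real k = (\<Sum>s\<in>S. real k)" using S(3) by simp
      also have "\<dots> \<le> (\<Sum>s\<in>S. c * real (card (Fs s)))" by (rule sum_mono) (rule kle)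
      also have "\<dots> = c * real (\<Sum>s\<in>S. card (Fs s))" by (simp add: sum_distrib_left)
      also have "\<dots> \<le> c * real m" using sumle c0 by (intro mult_left_mono) (use of_nat_le_iff in blast, simp)
      finally show ?thesis using k enat by simp
    qed
  qed
qed

end

lemma elog_le: "ereal_of_enat n \<le> ereal B \<Longrightarrow> 1 \<le> n \<Longrightarrow> elog n \<le> ereal (ln B)"
  by (cases n) (auto simp: elog_def one_enat_def)

lemma elog_ge: "ereal B \<le> ereal_of_enat n \<Longrightarrow> 0 < B \<Longrightarrow> ereal (ln B) \<le> elog n"
  by (cases n) (auto simp: elog_def)

lemma elog_mono: "n \<le> m \<Longrightarrow> 1 \<le> n \<Longrightarrow> elog n \<le> elog m"
  by (cases n; cases m) (auto simp: elog_def one_enat_def)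

lemma elog_nonneg: "1 \<le> n \<Longrightarrow> 0 \<le> elog n"
  by (cases n) (auto simp: elog_def one_enat_def)

context homx begin

lemma ub_chain:
  assumes th: "0 < th" "th \<le> 1/4" and r0: "0 < r0" "r0 \<le> a" and K: "1 \<le> K"
    and bnd: "\<And>r. 0 < r \<Longrightarrow> r \<le> r0 \<Longrightarrow> ereal_of_enat (covnum (th * r) (ball x r)) \<le> ereal K"
  shows "0 < R \<Longrightarrow> R \<le> r0 \<Longrightarrow> th * (2*th)^k * R \<le> rho \<Longrightarrow>
    ereal_of_enat (covnum rho (ball x R)) \<le> ereal ((c*K)^(k+1))"
proof (induction k arbitrary: R rho)
  case 0
  have "covnum rho (ball x R) \<le> covnum (th * R) (ball x R)" by (rule covnum_mono_rad) (use 0 in simp)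
  then have "ereal_of_enat (covnum rho (ball x R)) \<le> ereal K" using bnd[OF 0(1,2)] by (meson ereal_of_enat_le_iff order_trans)
  also have "\<dots> \<le> ereal (c*K)" using c1 K by simp
  finally show ?case by simp
next
  case (Suc k)
  have "1 * 1 \<le> c * K" by (rule mult_mono) (use c1 K in auto)
  then have cK: "1 \<le> c * K" by simp
  show ?case
  proof (cases "th * R \<le> rho")
    case True
    have "covnum rho (ball x R) \<le> covnum (th * R) (ball x R)" by (rule covnum_mono_rad) (use True in simp)
    then have "ereal_of_enat (covnum rho (ball x R)) \<le> ereal K" using bnd[OF Suc(2,3)] by (meson ereal_of_enat_le_iff order_trans)
    also have "\<dots> \<le> ereal ((c*K)^(Suc k + 1))"
    proof -
      have "K \<le> c * K" using c1 K by simp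
      also have "\<dots> = (c*K)^1" by simp
      also have "\<dots> \<le> (c*K)^(Suc k + 1)" by (rule power_increasing) (use cK in auto)
      finally show ?thesis by simp
    qed
    finally show ?thesis .
  next
    case False
    have pos: "0 < th * (2*th)^(Suc k) * R" using th Suc(2) by simp
    have rho0: "0 < rho" using pos Suc(4) by linarith
    have step: "ereal_of_enat (covnum rho (ball x R))
      \<le> ereal c * ereal_of_enat (covnum (th*R) (ball x R)) * ereal_of_enat (covnum rho (ball x (2*(th*R))))"
    proof (rule ub_step)
      have "(2*th)*R \<le> 1*R" by (rule mult_right_mono) (use th Suc(2) in auto)
      then show "2 * (th * R) \<le> R" by simp
    qed (use rho0 False th Suc(3) r0 in auto)
    have IH: "ereal_of_enat (covnum rho (ball x (2*th*R))) \<le> ereal ((c*K)^(k+1))"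
    proof (rule Suc.IH)
      show "0 < 2 * th * R" using th Suc(2) by simp
      have "2 * th * R \<le> 1 * R" by (rule mult_right_mono) (use th Suc(2) in auto)
      then show "2 * th * R \<le> r0" using Suc(3) by simp
      show "th * (2 * th) ^ k * (2 * th * R) \<le> rho" using Suc(4) by (simp add: algebra_simps)
    qed
    have "ereal c * ereal_of_enat (covnum (th*R) (ball x R)) \<le> ereal c * ereal K"
      using bnd[OF Suc(2,3)] c1 by (intro ereal_mult_left_mono) auto
    then have "ereal c * ereal_of_enat (covnum (th*R) (ball x R)) * ereal_of_enat (covnum rho (ball x (2*(th*R))))
       \<le> ereal (c * K) * ereal ((c*K)^(k+1))"
      using IH c1 K by (intro ereal_mult_mono) (auto simp: mult.assoc ereal_of_enat_nonneg)
    also have "\<dots> = ereal ((c*K)^(Suc k + 1))" by simp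
    finally show ?thesis using step by simp
  qed
qed

lemma lb_chain:
  assumes th: "0 < th" "th \<le> 1/8" and r0: "0 < r0" "r0 \<le> a"
    and bnd: "\<And>r. 0 < r \<Longrightarrow> r \<le> r0 \<Longrightarrow> enat K \<le> covnum (8 * th * r) (ball x r)"
  shows "0 < R \<Longrightarrow> R \<le> r0 \<Longrightarrow> 0 < rho \<Longrightarrow> rho \<le> th ^ k * R \<Longrightarrow>
    ereal ((real K / c)^k) \<le> ereal_of_enat (covnum rho (ball x R))"
proof (induction k arbitrary: R rho)
  case 0
  have "1 \<le> covnum rho (ball x R)" by (rule covnum_ge1) (use 0 in auto)
  then show ?case by (metis ereal_of_enat_le_iff ereal_of_enat_simps(1) of_nat_1 one_enat_def power_0)
next
  case (Suc k)
  have c0: "c > 0" using c1 by simp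
  have "th ^ k \<le> 1" using th by (intro power_le_one) auto
  then have thk: "th ^ Suc k \<le> th" using th by (simp add: mult_left_le)
  have "th ^ Suc k * R \<le> th * R" by (rule mult_right_mono) (use thk Suc(2) in auto)
  then have "rho \<le> th * R" using Suc(5) by linarith
  have st: "ereal (real K) * ereal_of_enat (covnum rho (ball x (th*R))) \<le> ereal c * ereal_of_enat (covnum rho (ball x R))"
  proof (rule lb_step)
    show "0 < rho" by fact
    show "rho \<le> th * R" by fact
    show "2 * (th * R) \<le> R" using th Suc(2) by simp
    show "R \<le> a" using Suc(3) r0 by simp
    have "enat K \<le> covnum (8 * th * (R/2)) (ball x (R/2))" by (rule bnd) (use Suc(2,3) in auto)
    then show "enat K \<le> covnum (4 * (th * R)) (ball x (R / 2))" by (simp add: algebra_simps)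
  qed
  have IH: "ereal ((real K / c)^k) \<le> ereal_of_enat (covnum rho (ball x (th*R)))"
  proof (rule Suc.IH)
    show "0 < th * R" using th Suc(2) by simp
    have "th * R \<le> 1 * R" by (rule mult_right_mono) (use th Suc(2) in auto)
    then show "th * R \<le> r0" using Suc(3) by simp
    show "0 < rho" by fact
    show "rho \<le> th ^ k * (th * R)" using Suc(5) by (simp add: algebra_simps)
  qed
  show ?case
  proof (cases "covnum rho (ball x R)")
    case infinity then show ?thesis by simp
  next
    case (enat m)
    show ?thesis
    proof (cases "K = 0")
      case True then show ?thesis by (simp add: enat ereal_of_enat_nonneg)
    next
      case False
      obtain m' where m': "covnum rho (ball x (th*R)) = enat m'"
        using st enat False by (cases "covnum rho (ball x (th*R))") auto
      have 1: "real K * real m' \<le> c * real m" using st enat m' by simp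
      have 2: "(real K / c)^k \<le> real m'" using IH m' by simp
      have "(real K / c)^(Suc k) = (real K / c) * (real K / c)^k" by simp
      also have "\<dots> \<le> (real K / c) * real m'" using 2 c0 by (intro mult_left_mono) auto
      also have "\<dots> \<le> real m" using 1 c0 by (simp add: field_simps)
      finally show ?thesis using enat by simp
    qed
  qed
qed

end

context homx begin

lemma ub_log:
  assumes th: "0 < th" "th \<le> 1/4" and r0: "0 < r0" "r0 \<le> a" and K: "1 \<le> K"
    and bnd: "\<And>r. 0 < r \<Longrightarrow> r \<le> r0 \<Longrightarrow> ereal_of_enat (covnum (th * r) (ball x r)) \<le> ereal K"
    and R: "0 < R" "R \<le> r0" and rho: "0 < rho" "rho \<le> R"
  shows "elog (covnum rho (ball x R)) \<le> ereal ((ln (R/rho) / ln (1/(2*th)) + 2) * ln (c*K))"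
proof -
  define L where "L = ln (1/(2*th))"
  have L0: "L > 0" unfolding L_def using th by simp
  have lR: "ln (R/rho) \<ge> 0" using R rho by simp
  define k where "k = nat \<lceil>ln (R/rho) / L\<rceil>"
  have k1: "ln (R/rho) / L \<le> real k" unfolding k_def by linarith
  have k2: "real k \<le> ln (R/rho) / L + 1" unfolding k_def using lR L0 by (simp add: divide_nonneg_pos)
  have "ln ((2*th)^k) = real k * ln (2*th)" by (rule ln_realpow)
  also have "\<dots> = - (real k * L)" unfolding L_def using th by (simp add: ln_div)
  also have "\<dots> \<le> - ln (R/rho)" using k1 L0 by (simp add: field_simps)
  also have "\<dots> = ln (rho/R)" using R rho by (simp add: ln_div)
  finally have "(2*th)^k \<le> rho/R" using th R rho by simp
  then have X1: "(2*th)^k * R \<le> rho" using R by (simp add: field_simps)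
  define X where "X = (2*th)^k * R"
  have X0: "0 \<le> X" unfolding X_def using th R by simp
  have "th * X \<le> 1 * X" using th X0 by (intro mult_right_mono) auto
  then have "th * X \<le> rho" using X1 unfolding X_def[symmetric] by linarith
  then have hk: "th * (2*th)^k * R \<le> rho" unfolding X_def by (simp only: mult.assoc)
  have cn: "ereal_of_enat (covnum rho (ball x R)) \<le> ereal ((c*K)^(k+1))"
    by (rule ub_chain[OF th r0 K]) (use bnd R hk in auto)
  have cK: "1 \<le> c * K" proof - have "1 * 1 \<le> c * K" by (rule mult_mono) (use c1 K in auto) then show ?thesis by simp qed
  have "elog (covnum rho (ball x R)) \<le> ereal (ln ((c*K)^(k+1)))"
    by (rule elog_le[OF cn]) (rule covnum_ge1, use rho in auto)
  also have "ln ((c*K)^(k+1)) = (real k + 1) * ln (c*K)" by (simp only: ln_realpow) simp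
  also have "\<dots> \<le> (ln (R/rho) / L + 2) * ln (c*K)" using k2 cK by (intro mult_right_mono) auto
  finally show ?thesis unfolding L_def by simp
qed

lemma lb_log:
  assumes th: "0 < th" "th \<le> 1/8" and r0: "0 < r0" "r0 \<le> a" and K: "c \<le> real K"
    and bnd: "\<And>r. 0 < r \<Longrightarrow> r \<le> r0 \<Longrightarrow> enat K \<le> covnum (8 * th * r) (ball x r)"
    and R: "0 < R" "R \<le> r0" and rho: "0 < rho" "rho \<le> R"
  shows "ereal ((ln (R/rho) / ln (1/th) - 1) * ln (real K / c)) \<le> elog (covnum rho (ball x R))"
proof -
  define L where "L = ln (1/th)"
  have L0: "L > 0" unfolding L_def using th by simp
  have lR: "ln (R/rho) \<ge> 0" using R rho by simp
  define k where "k = nat \<lfloor>ln (R/rho) / L\<rfloor>"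
  have q0: "0 \<le> ln (R/rho) / L" using lR L0 by simp
  have kq: "real k = real_of_int \<lfloor>ln (R/rho) / L\<rfloor>" unfolding k_def using q0 by simp
  have k1: "real k \<le> ln (R/rho) / L" unfolding kq by (rule of_int_floor_le)
  have k2: "ln (R/rho) / L - 1 \<le> real k" unfolding kq by linarith
  have "ln (rho/R) = - ln (R/rho)" using R rho by (simp add: ln_div)
  also have "\<dots> \<le> - (real k * L)" using k1 L0 by (simp add: le_divide_eq)
  also have "\<dots> = real k * ln th" unfolding L_def using th by (simp add: ln_div)
  also have "\<dots> = ln (th^k)" by (rule ln_realpow[symmetric])
  finally have "rho/R \<le> th^k" using th R rho by simp
  then have "rho \<le> th^k * R" using R by (simp add: field_simps)
  then have hk: "rho \<le> th^k * R" .
  have cn: "ereal ((real K / c)^k) \<le> ereal_of_enat (covnum rho (ball x R))"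
    by (rule lb_chain[OF th r0]) (use bnd R rho hk in auto)
  have c0: "c > 0" using c1 by simp
  have Kc: "1 \<le> real K / c" using K c0 by simp
  have "ereal (ln ((real K / c)^k)) \<le> elog (covnum rho (ball x R))"
    by (rule elog_ge[OF cn]) (use Kc in simp)
  moreover have "ln ((real K / c)^k) = real k * ln (real K / c)" by (rule ln_realpow)
  moreover have "(ln (R/rho) / L - 1) * ln (real K / c) \<le> real k * ln (real K / c)"
    using k2 Kc by (intro mult_right_mono) simp_all
  ultimately have "ereal ((ln (R/rho) / L - 1) * ln (real K / c)) \<le> elog (covnum rho (ball x R))"
    by (metis ereal_less_eq(3) order_trans)
  then show ?thesis unfolding L_def .
qed

end

lemma ev_ln_ge: "eventually (\<lambda>l. M \<le> ln (1/l)) (at_right (0::real))"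
  unfolding eventually_at_right_field
proof (intro exI[of _ "exp (-M)"] conjI allI impI)
  fix l :: real assume l: "0 < l" "l < exp (-M)"
  then have "ln l < -M" by (metis ln_less_cancel_iff ln_exp exp_gt_zero)
  then show "M \<le> ln (1/l)" using l by (simp add: ln_div)
qed simp

lemma ev_small:
  assumes "0 \<le> C" "0 < e"
  shows "eventually (\<lambda>l. 0 < ln (1/l) \<and> C / ln (1/l) \<le> e) (at_right (0::real))"
  using ev_ln_ge[of "max 1 (C/e)"]
proof (rule eventually_mono)
  fix l :: real assume h: "max 1 (C/e) \<le> ln (1/l)"
  then have p: "0 < ln (1/l)" by linarith
  have "C / e \<le> ln (1/l)" using h by linarith
  then have "C \<le> e * ln (1/l)" using assms by (simp add: field_simps)
  then show "0 < ln (1/l) \<and> C / ln (1/l) \<le> e" using p by (simp add: field_simps)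
qed

lemma ev_lt: "0 < b \<Longrightarrow> eventually (\<lambda>l. 0 < l \<and> l < b) (at_right (0::real))"
  unfolding eventually_at_right_field by auto

lemma Limsup_le_eps:
  fixes h :: "_ \<Rightarrow> ereal"
  assumes "\<And>e. e > 0 \<Longrightarrow> eventually (\<lambda>s. h s \<le> ereal (v + e)) F"
  shows "Limsup F h \<le> ereal v"
proof (rule ereal_le_epsilon2)
  fix e :: real assume "0 < e"
  have "Limsup F h \<le> ereal (v + e)" by (rule Limsup_bounded) (rule assms[OF \<open>0 < e\<close>])
  then show "Limsup F h \<le> ereal v + ereal e" by simp
qed

lemma Liminf_ge_eps:
  fixes h :: "_ \<Rightarrow> ereal"
  assumes "\<And>e. e > 0 \<Longrightarrow> eventually (\<lambda>s. ereal (v - e) \<le> h s) F"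
  shows "ereal v \<le> Liminf F h"
proof (rule ereal_le_epsilon2)
  fix e :: real assume "0 < e"
  have "ereal (v - e) \<le> Liminf F h" by (rule Liminf_bounded) (rule assms[OF \<open>0 < e\<close>])
  then show "ereal v \<le> Liminf F h + ereal e" by (cases "Liminf F h") auto
qed

lemma Liminf_le_freq:
  fixes h :: "_ \<Rightarrow> 'b::complete_linorder"
  assumes "frequently (\<lambda>s. h s \<le> l) F"
  shows "Liminf F h \<le> l"
proof (rule ccontr)
  assume "\<not> Liminf F h \<le> l"
  then have "eventually (\<lambda>s. h s > l) F" by (intro less_LiminfD) (simp add: not_le)
  then show False using assms by (simp add: frequently_def eventually_mono not_le)
qed

lemma Limsup_ge_freq:
  fixes h :: "_ \<Rightarrow> 'b::complete_linorder"
  assumes "frequently (\<lambda>s. l \<le> h s) F"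
  shows "l \<le> Limsup F h"
proof (rule ccontr)
  assume "\<not> l \<le> Limsup F h"
  then have "eventually (\<lambda>s. h s < l) F" by (intro Limsup_lessD) (simp add: not_le)
  then show False using assms by (simp add: frequently_def eventually_mono not_le)
qed

lemma mono_tendsto_at_right0:
  fixes g :: "real \<Rightarrow> ereal"
  assumes mono: "\<And>s t. 0 < s \<Longrightarrow> s \<le> t \<Longrightarrow> g s \<le> g t"
  shows "(g \<longlongrightarrow> (INF t\<in>{0<..}. g t)) (at_right 0)"
proof (rule order_tendstoI)
  fix y assume y: "y < (INF t\<in>{0<..}. g t)"
  have "y < g t" if "0 < t" for t
    using y INF_lower[of t "{0<..}" g] that by (simp add: less_le_trans)
  then show "eventually (\<lambda>t. y < g t) (at_right 0)"
    unfolding eventually_at_right_field by (intro exI[of _ 1]) auto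
next
  fix y assume y: "(INF t\<in>{0<..}. g t) < y"
  then obtain t0 where t0: "0 < t0" "g t0 < y" by (auto simp: INF_less_iff)
  have "g t < y" if "0 < t" "t < t0" for t using mono[of t t0] that t0 by simp
  then show "eventually (\<lambda>t. g t < y) (at_right 0)"
    unfolding eventually_at_right_field using t0 by (intro exI[of _ t0]) auto
qed

lemma div_up:
  assumes "0 < l" "e \<le> ereal ((l / Lq + D) * A)"
  shows "e / ereal l \<le> ereal (A / Lq + D * A / l)"
proof -
  have "ereal l * ereal (A / Lq + D * A / l) = ereal ((l / Lq + D) * A)"
    using assms(1) by (simp add: field_simps)
  then show ?thesis using assms by (subst ereal_divide_le_pos) auto
qed

lemma div_lo:
  assumes "0 < l" "ereal ((l / Lq - D) * A) \<le> e"
  shows "ereal (A / Lq - D * A / l) \<le> e / ereal l"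
proof -
  have "ereal l * ereal (A / Lq - D * A / l) = ereal ((l / Lq - D) * A)"
    using assms(1) by (simp add: field_simps)
  then show ?thesis using assms by (subst ereal_le_divide_pos) auto
qed

context homx begin

lemma UBC:
  assumes th: "0 < th" "th \<le> 1/4" and r0: "0 < r0" "r0 \<le> a" and K: "1 \<le> K"
    and bnd: "\<And>r. 0 < r \<Longrightarrow> r \<le> r0 \<Longrightarrow> ereal_of_enat (covnum (th * r) (ball x r)) \<le> ereal K"
  shows "Limsup (at_right 0) (\<lambda>lam. Limsup (at_right 0) (\<lambda>r. elog (covnum (lam * r) (ball x r)) / ereal (ln (1 / lam))))
           \<le> ereal (ln (c*K) / ln (1/(2*th)))"
    and "Limsup (at_right 0) (\<lambda>lam. Limsup (at_right 0) (\<lambda>r. elog (covnum (lam * r) (cball x r)) / ereal (ln (1 / lam))))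
           \<le> ereal (ln (c*K) / ln (1/(2*th)))"
    and "eventually (\<lambda>R. Limsup (at_right 0) (\<lambda>r. elog (covnum r (ball x R)) / ereal (ln (1 / r)))
           \<le> ereal (ln (c*K) / ln (1/(2*th)))) (at_right 0)"
proof -
  define Lq where "Lq = ln (1/(2*th))"
  define A where "A = ln (c*K)"
  have Lq0: "Lq > 0" unfolding Lq_def using th by simp
  have cK: "1 \<le> c * K" proof - have "1 * 1 \<le> c * K" by (rule mult_mono) (use c1 K in auto) then show ?thesis by simp qed
  have A0: "A \<ge> 0" unfolding A_def using cK by simp
  have ul: "elog (covnum rho (ball x R)) \<le> ereal ((ln (R/rho) / Lq + 2) * A)"
    if "0 < R" "R \<le> r0" "0 < rho" "rho \<le> R" for R rho
    unfolding Lq_def A_def by (rule ub_log[OF th r0 K]) (use bnd that in auto)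
  have evs: "eventually (\<lambda>l. (0 < ln (1/l) \<and> C / ln (1/l) \<le> e) \<and> 0 < l \<and> l < b) (at_right 0)"
    if "0 \<le> C" "0 < e" "0 < b" for C e b :: real
    by (intro eventually_conj ev_small ev_lt that)
  have "Limsup (at_right 0) (\<lambda>lam. Limsup (at_right 0) (\<lambda>r. elog (covnum (lam * r) (ball x r)) / ereal (ln (1 / lam))))
           \<le> ereal (A / Lq)"
  proof (rule Limsup_le_eps)
    fix e :: real assume e: "e > 0"
    have "eventually (\<lambda>l. (0 < ln (1/l) \<and> 2*A / ln (1/l) \<le> e) \<and> 0 < l \<and> l < 1) (at_right 0)"
      by (rule evs) (use A0 e in auto)
    then show "eventually (\<lambda>lam. Limsup (at_right 0) (\<lambda>r. elog (covnum (lam * r) (ball x r)) / ereal (ln (1 / lam)))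
            \<le> ereal (A / Lq + e)) (at_right 0)"
    proof (rule eventually_mono)
      fix lam :: real assume lam: "(0 < ln (1/lam) \<and> 2*A / ln (1/lam) \<le> e) \<and> 0 < lam \<and> lam < 1"
      have "eventually (\<lambda>r. 0 < r \<and> r < r0) (at_right 0)" using ev_lt[of r0] r0 by simp
      then have "eventually (\<lambda>r. elog (covnum (lam * r) (ball x r)) / ereal (ln (1 / lam)) \<le> ereal (A / Lq + e)) (at_right 0)"
      proof (rule eventually_mono)
        fix r assume r: "0 < r \<and> r < r0"
        have "elog (covnum (lam * r) (ball x r)) \<le> ereal ((ln (r/(lam*r)) / Lq + 2) * A)"
          by (rule ul) (use r lam in \<open>auto simp: mult_left_le_one_le\<close>)
        also have "ln (r/(lam*r)) = ln (1/lam)" using r by simp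
        finally have "elog (covnum (lam * r) (ball x r)) / ereal (ln (1 / lam)) \<le> ereal (A / Lq + 2 * A / ln (1/lam))"
          by (rule div_up[OF conjunct1[OF conjunct1[OF lam]]])
        also have "\<dots> \<le> ereal (A / Lq + e)" using lam by simp
        finally show "elog (covnum (lam * r) (ball x r)) / ereal (ln (1 / lam)) \<le> ereal (A / Lq + e)" .
      qed
      then show "Limsup (at_right 0) (\<lambda>r. elog (covnum (lam * r) (ball x r)) / ereal (ln (1 / lam))) \<le> ereal (A / Lq + e)"
        by (rule Limsup_bounded)
    qed
  qed
  then show "Limsup (at_right 0) (\<lambda>lam. Limsup (at_right 0) (\<lambda>r. elog (covnum (lam * r) (ball x r)) / ereal (ln (1 / lam))))
           \<le> ereal (ln (c*K) / ln (1/(2*th)))"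
    unfolding Lq_def A_def .
  have "Limsup (at_right 0) (\<lambda>lam. Limsup (at_right 0) (\<lambda>r. elog (covnum (lam * r) (cball x r)) / ereal (ln (1 / lam))))
           \<le> ereal (A / Lq)"
  proof (rule Limsup_le_eps)
    fix e :: real assume e: "e > 0"
    define D where "D = ln 2 / Lq + 2"
    have D0: "D \<ge> 0" unfolding D_def using Lq0 by simp
    have "eventually (\<lambda>l. (0 < ln (1/l) \<and> D*A / ln (1/l) \<le> e) \<and> 0 < l \<and> l < 1) (at_right 0)"
      by (rule evs) (use A0 e D0 in auto)
    then show "eventually (\<lambda>lam. Limsup (at_right 0) (\<lambda>r. elog (covnum (lam * r) (cball x r)) / ereal (ln (1 / lam)))
            \<le> ereal (A / Lq + e)) (at_right 0)"
    proof (rule eventually_mono)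
      fix lam :: real assume lam: "(0 < ln (1/lam) \<and> D*A / ln (1/lam) \<le> e) \<and> 0 < lam \<and> lam < 1"
      have "eventually (\<lambda>r. 0 < r \<and> r < r0/2) (at_right 0)" using ev_lt[of "r0/2"] r0 by simp
      then have "eventually (\<lambda>r. elog (covnum (lam * r) (cball x r)) / ereal (ln (1 / lam)) \<le> ereal (A / Lq + e)) (at_right 0)"
      proof (rule eventually_mono)
        fix r assume r: "0 < r \<and> r < r0/2"
        have "elog (covnum (lam * r) (cball x r)) \<le> elog (covnum (lam * r) (ball x (2*r)))"
        proof (rule elog_mono)
          show "covnum (lam * r) (cball x r) \<le> covnum (lam * r) (ball x (2 * r))"
            by (rule covnum_mono_set) (use r in auto)
          show "1 \<le> covnum (lam * r) (cball x r)" by (rule covnum_ge1) (use r in auto)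
        qed
        also have "\<dots> \<le> ereal ((ln ((2*r)/(lam*r)) / Lq + 2) * A)"
        proof (rule ul)
          have "lam * r \<le> 1 * r" using lam r by (intro mult_right_mono) auto
          then show "lam * r \<le> 2 * r" using r by simp
        qed (use r lam in auto)
        also have "ln ((2*r)/(lam*r)) / Lq + 2 = ln (1/lam) / Lq + D"
        proof -
          have e1: "(2*r)/(lam*r) = 2 * (1/lam)" using r by simp
          have "ln ((2*r)/(lam*r)) = ln 2 + ln (1/lam)" unfolding e1 by (rule ln_mult_pos) (use lam in auto)
          then show ?thesis unfolding D_def by (simp add: add_divide_distrib)
        qed
        finally have "elog (covnum (lam * r) (cball x r)) / ereal (ln (1 / lam)) \<le> ereal (A / Lq + D * A / ln (1/lam))"
          by (rule div_up[OF conjunct1[OF conjunct1[OF lam]]])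
        also have "\<dots> \<le> ereal (A / Lq + e)" using lam by simp
        finally show "elog (covnum (lam * r) (cball x r)) / ereal (ln (1 / lam)) \<le> ereal (A / Lq + e)" .
      qed
      then show "Limsup (at_right 0) (\<lambda>r. elog (covnum (lam * r) (cball x r)) / ereal (ln (1 / lam))) \<le> ereal (A / Lq + e)"
        by (rule Limsup_bounded)
    qed
  qed
  then show "Limsup (at_right 0) (\<lambda>lam. Limsup (at_right 0) (\<lambda>r. elog (covnum (lam * r) (cball x r)) / ereal (ln (1 / lam))))
           \<le> ereal (ln (c*K) / ln (1/(2*th)))"
    unfolding Lq_def A_def .
  have "eventually (\<lambda>R. 0 < R \<and> R < min r0 1) (at_right 0)" using ev_lt[of "min r0 1"] r0 by simp
  then have "eventually (\<lambda>R. Limsup (at_right 0) (\<lambda>r. elog (covnum r (ball x R)) / ereal (ln (1 / r)))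
           \<le> ereal (A / Lq)) (at_right 0)"
  proof (rule eventually_mono)
    fix R assume R: "0 < R \<and> R < min r0 1"
    show "Limsup (at_right 0) (\<lambda>r. elog (covnum r (ball x R)) / ereal (ln (1 / r))) \<le> ereal (A / Lq)"
    proof (rule Limsup_le_eps)
      fix e :: real assume e: "e > 0"
      have "eventually (\<lambda>l. (0 < ln (1/l) \<and> 2*A / ln (1/l) \<le> e) \<and> 0 < l \<and> l < R) (at_right 0)"
        by (rule evs) (use A0 e R in auto)
      then show "eventually (\<lambda>r. elog (covnum r (ball x R)) / ereal (ln (1 / r)) \<le> ereal (A / Lq + e)) (at_right 0)"
      proof (rule eventually_mono)
        fix r :: real assume r: "(0 < ln (1/r) \<and> 2*A / ln (1/r) \<le> e) \<and> 0 < r \<and> r < R"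
        have "elog (covnum r (ball x R)) \<le> ereal ((ln (R/r) / Lq + 2) * A)"
          by (rule ul) (use r R in auto)
        also have "\<dots> \<le> ereal ((ln (1/r) / Lq + 2) * A)"
        proof -
          have "R / r \<le> 1 / r" using r R by (simp add: divide_right_mono)
          then have "ln (R/r) \<le> ln (1/r)" using r R by simp
          then have "ln (R/r) / Lq \<le> ln (1/r) / Lq" using Lq0 by (simp add: divide_right_mono)
          then show ?thesis using A0 by (simp add: mult_right_mono)
        qed
        finally have "elog (covnum r (ball x R)) / ereal (ln (1 / r)) \<le> ereal (A / Lq + 2 * A / ln (1/r))"
          by (rule div_up[OF conjunct1[OF conjunct1[OF r]]])
        also have "\<dots> \<le> ereal (A / Lq + e)" using r by simp
        finally show "elog (covnum r (ball x R)) / ereal (ln (1 / r)) \<le> ereal (A / Lq + e)" .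
      qed
    qed
  qed
  then show "eventually (\<lambda>R. Limsup (at_right 0) (\<lambda>r. elog (covnum r (ball x R)) / ereal (ln (1 / r)))
           \<le> ereal (ln (c*K) / ln (1/(2*th)))) (at_right 0)"
    unfolding Lq_def A_def .
qed

end

context homx begin

lemma LBC:
  assumes th: "0 < th" "th \<le> 1/8" and r0: "0 < r0" "r0 \<le> a" and K: "c \<le> real K"
    and bnd: "\<And>r. 0 < r \<Longrightarrow> r \<le> r0 \<Longrightarrow> enat K \<le> covnum (8 * th * r) (ball x r)"
  shows "ereal (ln (real K / c) / ln (1/th))
      \<le> Liminf (at_right 0) (\<lambda>lam. Liminf (at_right 0) (\<lambda>r. elog (covnum (lam * r) (ball x r)) / ereal (ln (1 / lam))))"
    and "eventually (\<lambda>R. ereal (ln (real K / c) / ln (1/th))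
      \<le> Liminf (at_right 0) (\<lambda>r. elog (covnum r (ball x R)) / ereal (ln (1 / r)))) (at_right 0)"
proof -
  define Lq where "Lq = ln (1/th)"
  define A where "A = ln (real K / c)"
  have Lq0: "Lq > 0" unfolding Lq_def using th by simp
  have c0: "c > 0" using c1 by simp
  have A0: "A \<ge> 0" unfolding A_def using K c0 by simp
  have ll: "ereal ((ln (R/rho) / Lq - 1) * A) \<le> elog (covnum rho (ball x R))"
    if "0 < R" "R \<le> r0" "0 < rho" "rho \<le> R" for R rho
    unfolding Lq_def A_def by (rule lb_log[OF th r0 K]) (use bnd that in auto)
  have evs: "eventually (\<lambda>l. (0 < ln (1/l) \<and> C / ln (1/l) \<le> e) \<and> 0 < l \<and> l < b) (at_right 0)"
    if "0 \<le> C" "0 < e" "0 < b" for C e b :: real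
    by (intro eventually_conj ev_small ev_lt that)
  have "ereal (A / Lq) \<le> Liminf (at_right 0) (\<lambda>lam. Liminf (at_right 0) (\<lambda>r. elog (covnum (lam * r) (ball x r)) / ereal (ln (1 / lam))))"
  proof (rule Liminf_ge_eps)
    fix e :: real assume e: "e > 0"
    have "eventually (\<lambda>l. (0 < ln (1/l) \<and> 1*A / ln (1/l) \<le> e) \<and> 0 < l \<and> l < 1) (at_right 0)"
      by (rule evs) (use A0 e in auto)
    then show "eventually (\<lambda>lam. ereal (A / Lq - e) \<le> Liminf (at_right 0) (\<lambda>r. elog (covnum (lam * r) (ball x r)) / ereal (ln (1 / lam)))) (at_right 0)"
    proof (rule eventually_mono)
      fix lam :: real assume lam: "(0 < ln (1/lam) \<and> 1*A / ln (1/lam) \<le> e) \<and> 0 < lam \<and> lam < 1"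
      have "eventually (\<lambda>r. 0 < r \<and> r < r0) (at_right 0)" using ev_lt[of r0] r0 by simp
      then have "eventually (\<lambda>r. ereal (A / Lq - e) \<le> elog (covnum (lam * r) (ball x r)) / ereal (ln (1 / lam))) (at_right 0)"
      proof (rule eventually_mono)
        fix r assume r: "0 < r \<and> r < r0"
        have "ereal (A / Lq - e) \<le> ereal (A / Lq - 1 * A / ln (1/lam))" using lam by simp
        also have "\<dots> \<le> elog (covnum (lam * r) (ball x r)) / ereal (ln (1 / lam))"
        proof (rule div_lo[OF conjunct1[OF conjunct1[OF lam]]])
          have "ereal ((ln (r/(lam*r)) / Lq - 1) * A) \<le> elog (covnum (lam * r) (ball x r))"
            by (rule ll) (use r lam in \<open>auto simp: mult_left_le_one_le\<close>)
          moreover have "ln (r/(lam*r)) = ln (1/lam)" using r by simp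
          ultimately show "ereal ((ln (1/lam) / Lq - 1) * A) \<le> elog (covnum (lam * r) (ball x r))" by simp
        qed
        finally show "ereal (A / Lq - e) \<le> elog (covnum (lam * r) (ball x r)) / ereal (ln (1 / lam))" .
      qed
      then show "ereal (A / Lq - e) \<le> Liminf (at_right 0) (\<lambda>r. elog (covnum (lam * r) (ball x r)) / ereal (ln (1 / lam)))"
        by (rule Liminf_bounded)
    qed
  qed
  then show "ereal (ln (real K / c) / ln (1/th))
      \<le> Liminf (at_right 0) (\<lambda>lam. Liminf (at_right 0) (\<lambda>r. elog (covnum (lam * r) (ball x r)) / ereal (ln (1 / lam))))"
    unfolding Lq_def A_def .
  have "eventually (\<lambda>R. 0 < R \<and> R < min r0 1) (at_right 0)" using ev_lt[of "min r0 1"] r0 by simp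
  then have "eventually (\<lambda>R. ereal (A / Lq) \<le> Liminf (at_right 0) (\<lambda>r. elog (covnum r (ball x R)) / ereal (ln (1 / r)))) (at_right 0)"
  proof (rule eventually_mono)
    fix R assume R: "0 < R \<and> R < min r0 1"
    define D where "D = ln (1/R) / Lq + 1"
    have D0: "D \<ge> 0" unfolding D_def using Lq0 R by simp
    show "ereal (A / Lq) \<le> Liminf (at_right 0) (\<lambda>r. elog (covnum r (ball x R)) / ereal (ln (1 / r)))"
    proof (rule Liminf_ge_eps)
      fix e :: real assume e: "e > 0"
      have "eventually (\<lambda>l. (0 < ln (1/l) \<and> D*A / ln (1/l) \<le> e) \<and> 0 < l \<and> l < R) (at_right 0)"
        by (rule evs) (use A0 e R D0 in auto)
      then show "eventually (\<lambda>r. ereal (A / Lq - e) \<le> elog (covnum r (ball x R)) / ereal (ln (1 / r))) (at_right 0)"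
      proof (rule eventually_mono)
        fix r :: real assume r: "(0 < ln (1/r) \<and> D*A / ln (1/r) \<le> e) \<and> 0 < r \<and> r < R"
        have "ereal (A / Lq - e) \<le> ereal (A / Lq - D * A / ln (1/r))" using r by simp
        also have "\<dots> \<le> elog (covnum r (ball x R)) / ereal (ln (1 / r))"
        proof (rule div_lo[OF conjunct1[OF conjunct1[OF r]]])
          have "ereal ((ln (R/r) / Lq - 1) * A) \<le> elog (covnum r (ball x R))"
            by (rule ll) (use r R in auto)
          moreover have "ln (R/r) / Lq - 1 = ln (1/r) / Lq - D"
          proof -
            have "ln (R/r) = ln (1/r) - ln (1/R)" using r R by (simp add: ln_div)
            then show ?thesis unfolding D_def by (simp add: diff_divide_distrib)
          qed
          ultimately show "ereal ((ln (1/r) / Lq - D) * A) \<le> elog (covnum r (ball x R))" by simp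
        qed
        finally show "ereal (A / Lq - e) \<le> elog (covnum r (ball x R)) / ereal (ln (1 / r))" .
      qed
    qed
  qed
  then show "eventually (\<lambda>R. ereal (ln (real K / c) / ln (1/th))
      \<le> Liminf (at_right 0) (\<lambda>r. elog (covnum r (ball x R)) / ereal (ln (1 / r)))) (at_right 0)"
    unfolding Lq_def A_def .
qed

end

lemma elog_le_inv: "elog n \<le> ereal b \<Longrightarrow> 1 \<le> n \<Longrightarrow> ereal_of_enat n \<le> ereal (exp b)"
proof (cases n)
  case (enat k)
  assume h: "elog n \<le> ereal b" "1 \<le> n"
  then have k1: "k \<ge> 1" using enat by (simp add: one_enat_def)
  have "ln (real k) \<le> b" using h enat by (simp add: elog_def)
  then have "exp (ln (real k)) \<le> exp b" by simp
  then show ?thesis using enat k1 by simp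
next
  case infinity
  assume "elog n \<le> ereal b" then show ?thesis using infinity by (simp add: elog_def)
qed

lemma elog_ge_inv: "ereal b \<le> elog n \<Longrightarrow> 1 \<le> n \<Longrightarrow> enat (nat \<lceil>exp b\<rceil>) \<le> n"
proof (cases n)
  case (enat k)
  assume h: "ereal b \<le> elog n" "1 \<le> n"
  then have k1: "k \<ge> 1" using enat by (simp add: one_enat_def)
  have "b \<le> ln (real k)" using h enat by (simp add: elog_def)
  then have "exp b \<le> exp (ln (real k))" by simp
  then have "exp b \<le> real k" using k1 by simp
  then have "nat \<lceil>exp b\<rceil> \<le> k" by (simp add: ceiling_le_iff nat_le_iff)
  then show ?thesis using enat by simp
next
  case infinity then show ?thesis by simp
qed

lemma ereal_dense_le: "(\<And>y. x < ereal y \<Longrightarrow> z \<le> ereal y) \<Longrightarrow> z \<le> (x::ereal)"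
  by (metis ereal_dense2 leD le_less_linear)

lemma ereal_dense_ge: "(\<And>y. ereal y < x \<Longrightarrow> ereal y \<le> z) \<Longrightarrow> x \<le> (z::ereal)"
  by (metis ereal_dense2 leD le_less_linear)

context homx begin

lemma fu_nonneg: "0 < lam \<Longrightarrow> lam < 1 \<Longrightarrow>
  0 \<le> Liminf (at_right 0) (\<lambda>r. elog (covnum (lam * r) (ball x r)) / ereal (ln (1 / lam)))"
  apply (rule Liminf_bounded)
  using ev_lt[of 1]
  apply (rule eventually_mono, simp)
  apply (subst ereal_le_divide_pos)
  apply (auto intro!: elog_nonneg covnum_ge1)
  done

lemma fc_nonneg: "0 < lam \<Longrightarrow> lam < 1 \<Longrightarrow>
  0 \<le> Liminf (at_right 0) (\<lambda>r. elog (covnum (lam * r) (cball x r)) / ereal (ln (1 / lam)))"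
  apply (rule Liminf_bounded)
  using ev_lt[of 1]
  apply (rule eventually_mono, simp)
  apply (subst ereal_le_divide_pos)
  apply (auto intro!: elog_nonneg covnum_ge1)
  done

lemma bl_nonneg: "0 < R \<Longrightarrow>
  0 \<le> Liminf (at_right 0) (\<lambda>r. elog (covnum r (ball x R)) / ereal (ln (1 / r)))"
  apply (rule Liminf_bounded)
  using ev_lt[of 1]
  apply (rule eventually_mono, simp)
  apply (subst ereal_le_divide_pos)
  apply (auto intro!: elog_nonneg covnum_ge1)
  done

end

context homx begin

lemma FU:
  assumes y: "Liminf (at_right 0) (\<lambda>lam. Limsup (at_right 0) (\<lambda>r. elog (covnum (lam * r) (ball x r)) / ereal (ln (1 / lam)))) < ereal y"
    and e: "0 < e"
  shows "Limsup (at_right 0) (\<lambda>lam. Limsup (at_right 0) (\<lambda>r. elog (covnum (lam * r) (ball x r)) / ereal (ln (1 / lam)))) \<le> ereal (y + e)"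
    and "Limsup (at_right 0) (\<lambda>lam. Limsup (at_right 0) (\<lambda>r. elog (covnum (lam * r) (cball x r)) / ereal (ln (1 / lam)))) \<le> ereal (y + e)"
    and "eventually (\<lambda>R. Limsup (at_right 0) (\<lambda>r. elog (covnum r (ball x R)) / ereal (ln (1 / r))) \<le> ereal (y + e)) (at_right 0)"
proof -
  let ?fu = "\<lambda>lam. Limsup (at_right 0) (\<lambda>r. elog (covnum (lam * r) (ball x r)) / ereal (ln (1 / lam)))"
  have freq: "frequently (\<lambda>th. ?fu th < ereal y) (at_right 0)"
  proof (rule ccontr)
    assume "\<not> frequently (\<lambda>th. ?fu th < ereal y) (at_right 0)"
    then have "eventually (\<lambda>th. ereal y \<le> ?fu th) (at_right 0)"
      by (simp add: not_frequently not_less)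
    then have "ereal y \<le> Liminf (at_right 0) ?fu" by (rule Liminf_bounded)
    then show False using y by simp
  qed
  define M where "M = max (ln 4) ((ln c + (y+e) * ln 2) / e)"
  have ev: "eventually (\<lambda>th. M \<le> ln (1/th) \<and> 0 < th \<and> th < 1) (at_right 0)"
    by (intro eventually_conj ev_ln_ge ev_lt) simp
  obtain th where th: "M \<le> ln (1/th)" "0 < th" "th < 1" "?fu th < ereal y"
    using frequently_ex[OF frequently_eventually_conj[OF freq ev]] by blast
  define Lt where "Lt = ln (1/th)"
  have Lt4: "ln 4 \<le> Lt" using th(1) unfolding M_def Lt_def by simp
  have th4: "th \<le> 1/4"
  proof -
    have "ln 4 \<le> ln (1/th)" using Lt4 unfolding Lt_def .
    then have "4 \<le> 1/th" using th by (subst (asm) ln_le_cancel_iff) auto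
    then show ?thesis using th by (simp add: field_simps)
  qed
  have ln4: "ln (4::real) = 2 * ln 2"
  proof -
    have "ln (4::real) = ln (2 * 2)" by simp
    also have "\<dots> = 2 * ln 2" by (subst ln_mult_pos) auto
    finally show ?thesis .
  qed
  have ln2: "ln (2::real) > 0" by simp
  have Lt0: "Lt > 0" using Lt4 ln4 ln2 by linarith
  have "0 \<le> Liminf (at_right 0) (\<lambda>r. elog (covnum (th * r) (ball x r)) / ereal (ln (1 / th)))"
    by (rule fu_nonneg) (use th in auto)
  also have "\<dots> \<le> ?fu th" by (rule Liminf_le_Limsup) simp
  finally have "0 < ereal y" using th(4) by (rule le_less_trans)
  then have y0: "0 < y" by simp
  have "eventually (\<lambda>r. elog (covnum (th * r) (ball x r)) / ereal (ln (1 / th)) < ereal y) (at_right 0)"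
    by (rule Limsup_lessD) (rule th(4))
  then have "eventually (\<lambda>r. elog (covnum (th * r) (ball x r)) \<le> ereal (y * Lt)) (at_right 0)"
  proof (rule eventually_mono)
    fix r assume "elog (covnum (th * r) (ball x r)) / ereal (ln (1 / th)) < ereal y"
    then have "elog (covnum (th * r) (ball x r)) < ereal Lt * ereal y"
      using Lt0 unfolding Lt_def by (subst (asm) ereal_divide_less_pos) auto
    then show "elog (covnum (th * r) (ball x r)) \<le> ereal (y * Lt)" by (simp add: mult.commute)
  qed
  then obtain b where b: "b > 0" "\<And>r. 0 < r \<Longrightarrow> r < b \<Longrightarrow> elog (covnum (th * r) (ball x r)) \<le> ereal (y * Lt)"
    unfolding eventually_at_right_field by auto
  define r0 where "r0 = min a (b/2)"
  have r0: "0 < r0" "r0 \<le> a" unfolding r0_def using a0 b by auto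
  define K where "K = exp (y * Lt)"
  have K1: "1 \<le> K" unfolding K_def using y0 Lt0 by simp
  have bnd: "ereal_of_enat (covnum (th * r) (ball x r)) \<le> ereal K" if "0 < r" "r \<le> r0" for r
    unfolding K_def
  proof (rule elog_le_inv)
    show "elog (covnum (th * r) (ball x r)) \<le> ereal (y * Lt)" by (rule b(2)) (use that r0_def b in auto)
    show "1 \<le> covnum (th * r) (ball x r)" by (rule covnum_ge1) (use that in auto)
  qed
  have key: "ln (c*K) / ln (1/(2*th)) \<le> y + e"
  proof -
    have c0: "c > 0" using c1 by simp
    have lcK: "ln (c*K) = ln c + y * Lt" unfolding K_def using c0 by (simp add: ln_mult_pos)
    have l2: "ln (1/(2*th)) = Lt - ln 2" unfolding Lt_def using th by (simp add: ln_div ln_mult_pos)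
    have pos: "Lt - ln 2 > 0" using Lt4 ln4 ln2 by linarith
    have "(ln c + (y+e) * ln 2) / e \<le> Lt" using th(1) unfolding M_def Lt_def by simp
    then have "ln c + (y+e) * ln 2 \<le> e * Lt" using e by (simp add: field_simps)
    then have "ln c + y * Lt \<le> (y + e) * (Lt - ln 2)" by (simp add: algebra_simps)
    then show ?thesis unfolding lcK l2 using pos by (simp add: field_simps)
  qed
  note U = UBC[OF conjI[OF th(2) th4, THEN conjunct1] conjI[OF th(2) th4, THEN conjunct2] r0 K1 bnd]
  show "Limsup (at_right 0) (\<lambda>lam. Limsup (at_right 0) (\<lambda>r. elog (covnum (lam * r) (ball x r)) / ereal (ln (1 / lam)))) \<le> ereal (y + e)"
    using U(1) key by (meson ereal_less_eq(3) order_trans)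
  show "Limsup (at_right 0) (\<lambda>lam. Limsup (at_right 0) (\<lambda>r. elog (covnum (lam * r) (cball x r)) / ereal (ln (1 / lam)))) \<le> ereal (y + e)"
    using U(2) key by (meson ereal_less_eq(3) order_trans)
  show "eventually (\<lambda>R. Limsup (at_right 0) (\<lambda>r. elog (covnum r (ball x R)) / ereal (ln (1 / r))) \<le> ereal (y + e)) (at_right 0)"
    using U(3)
  proof (rule eventually_mono)
    fix R assume "Limsup (at_right 0) (\<lambda>r. elog (covnum r (ball x R)) / ereal (ln (1 / r))) \<le> ereal (ln (c * K) / ln (1 / (2 * th)))"
    then show "Limsup (at_right 0) (\<lambda>r. elog (covnum r (ball x R)) / ereal (ln (1 / r))) \<le> ereal (y + e)"
      using key by (meson ereal_less_eq(3) order_trans)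
  qed
qed

end

context homx begin

lemma FL:
  assumes y: "ereal y < Limsup (at_right 0) (\<lambda>lam. Liminf (at_right 0) (\<lambda>r. elog (covnum (lam * r) (ball x r)) / ereal (ln (1 / lam))))"
    and e: "0 < e" and ye: "e < y"
  shows "ereal (y - e) \<le> Liminf (at_right 0) (\<lambda>lam. Liminf (at_right 0) (\<lambda>r. elog (covnum (lam * r) (ball x r)) / ereal (ln (1 / lam))))"
    and "eventually (\<lambda>R. ereal (y - e) \<le> Liminf (at_right 0) (\<lambda>r. elog (covnum r (ball x R)) / ereal (ln (1 / r)))) (at_right 0)"
proof -
  let ?fl = "\<lambda>lam. Liminf (at_right 0) (\<lambda>r. elog (covnum (lam * r) (ball x r)) / ereal (ln (1 / lam)))"
  have y0: "0 < y" using e ye by simp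
  have c0: "c > 0" using c1 by simp
  have freq: "frequently (\<lambda>th. ereal y < ?fl th) (at_right 0)"
  proof (rule ccontr)
    assume "\<not> frequently (\<lambda>th. ereal y < ?fl th) (at_right 0)"
    then have "eventually (\<lambda>th. ?fl th \<le> ereal y) (at_right 0)"
      by (simp add: not_frequently not_less)
    then have "Limsup (at_right 0) ?fl \<le> ereal y" by (rule Limsup_bounded)
    then show False using y by simp
  qed
  define M where "M = max (max 0 (ln c / y)) ((ln c + (y - e) * ln 8) / e)"
  have ev: "eventually (\<lambda>th. M \<le> ln (1/th) \<and> 0 < th \<and> th < 1) (at_right 0)"
    by (intro eventually_conj ev_ln_ge ev_lt) simp
  obtain ph where ph: "M \<le> ln (1/ph)" "0 < ph" "ph < 1" "ereal y < ?fl ph"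
    using frequently_ex[OF frequently_eventually_conj[OF freq ev]] by blast
  define Lt where "Lt = ln (1/ph)"
  have Lt0: "Lt > 0" unfolding Lt_def using ph by simp
  have "eventually (\<lambda>r. ereal y < elog (covnum (ph * r) (ball x r)) / ereal (ln (1 / ph))) (at_right 0)"
    by (rule less_LiminfD) (rule ph(4))
  then have "eventually (\<lambda>r. ereal (y * Lt) \<le> elog (covnum (ph * r) (ball x r))) (at_right 0)"
  proof (rule eventually_mono)
    fix r assume "ereal y < elog (covnum (ph * r) (ball x r)) / ereal (ln (1 / ph))"
    then have "ereal Lt * ereal y < elog (covnum (ph * r) (ball x r))"
      using Lt0 unfolding Lt_def by (subst (asm) ereal_less_divide_pos) auto
    then show "ereal (y * Lt) \<le> elog (covnum (ph * r) (ball x r))" by (simp add: mult.commute)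
  qed
  then obtain b where b: "b > 0" "\<And>r. 0 < r \<Longrightarrow> r < b \<Longrightarrow> ereal (y * Lt) \<le> elog (covnum (ph * r) (ball x r))"
    unfolding eventually_at_right_field by auto
  define r0 where "r0 = min a (b/2)"
  have r0: "0 < r0" "r0 \<le> a" unfolding r0_def using a0 b by auto
  define K where "K = nat \<lceil>exp (y * Lt)\<rceil>"
  have KK: "exp (y * Lt) \<le> real K" unfolding K_def by linarith
  have bLt: "ln c \<le> y * Lt"
  proof -
    have "ln c / y \<le> Lt" using ph(1) unfolding M_def Lt_def by simp
    then show ?thesis using y0 by (simp add: field_simps)
  qed
  have Kc: "c \<le> real K"
  proof -
    have "c = exp (ln c)" using c0 by simp
    also have "\<dots> \<le> exp (y * Lt)" using bLt by simp
    finally show ?thesis using KK by simp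
  qed
  have th: "0 < ph / 8" "ph / 8 \<le> 1/8" using ph by auto
  have bnd: "enat K \<le> covnum (8 * (ph/8) * r) (ball x r)" if "0 < r" "r \<le> r0" for r
  proof -
    have "enat K \<le> covnum (ph * r) (ball x r)" unfolding K_def
    proof (rule elog_ge_inv)
      show "ereal (y * Lt) \<le> elog (covnum (ph * r) (ball x r))" by (rule b(2)) (use that r0_def b in auto)
      show "1 \<le> covnum (ph * r) (ball x r)" by (rule covnum_ge1) (use that in auto)
    qed
    then show ?thesis by simp
  qed
  have key: "y - e \<le> ln (real K / c) / ln (1/(ph/8))"
  proof -
    have l8: "ln (1/(ph/8)) = Lt + ln 8" unfolding Lt_def using ph
      by (simp add: ln_div ln_mult_pos)
    have "ln (8::real) > 0" by simp
    then have pos: "Lt + ln 8 > 0" using Lt0 by linarith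
    have lK: "y * Lt - ln c \<le> ln (real K / c)"
    proof -
      have Kp: "real K > 0" using KK by (metis exp_gt_zero less_le_trans)
      have "y * Lt \<le> ln (real K)" using KK Kp by (metis ln_exp ln_le_cancel_iff exp_gt_zero)
      then show ?thesis using Kp c0 by (simp add: ln_div)
    qed
    have "(ln c + (y - e) * ln 8) / e \<le> Lt" using ph(1) unfolding M_def Lt_def by simp
    then have "ln c + (y - e) * ln 8 \<le> e * Lt" using e by (simp add: field_simps)
    then have "(y - e) * (Lt + ln 8) \<le> y * Lt - ln c" by (simp add: algebra_simps)
    then have "(y - e) * (Lt + ln 8) \<le> ln (real K / c)" using lK by linarith
    then show ?thesis unfolding l8 using pos by (simp add: field_simps)
  qed
  note L = LBC[OF th r0 Kc bnd]
  show "ereal (y - e) \<le> Liminf (at_right 0) ?fl"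
    using L(1) key by (meson ereal_less_eq(3) order_trans)
  show "eventually (\<lambda>R. ereal (y - e) \<le> Liminf (at_right 0) (\<lambda>r. elog (covnum r (ball x R)) / ereal (ln (1 / r)))) (at_right 0)"
    using L(2)
  proof (rule eventually_mono)
    fix R assume "ereal (ln (real K / c) / ln (1 / (ph / 8))) \<le> Liminf (at_right 0) (\<lambda>r. elog (covnum r (ball x R)) / ereal (ln (1 / r)))"
    then show "ereal (y - e) \<le> Liminf (at_right 0) (\<lambda>r. elog (covnum r (ball x R)) / ereal (ln (1 / r)))"
      using key by (meson ereal_less_eq(3) order_trans)
  qed
qed

end

lemma cball_sub_ball2: "0 < r \<Longrightarrow> cball x r \<subseteq> ball x (2*r)"
  by auto

context homx begin

lemma box_tendsto:
  shows "((\<lambda>R. Liminf (at_right 0) (\<lambda>r. elog (covnum r (ball x R)) / ereal (ln (1 / r)))) \<longlongrightarrow> lower_box_dim x) (at_right 0)"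
    and "((\<lambda>R. Limsup (at_right 0) (\<lambda>r. elog (covnum r (ball x R)) / ereal (ln (1 / r)))) \<longlongrightarrow> upper_box_dim x) (at_right 0)"
proof -
  have pt: "eventually (\<lambda>r. elog (covnum r (ball x s)) / ereal (ln (1 / r)) \<le> elog (covnum r (ball x t)) / ereal (ln (1 / r))) (at_right 0)"
    if "0 < s" "s \<le> t" for s t
    using ev_lt[of 1]
  proof (rule eventually_mono, simp)
    fix r :: real assume r: "0 < r \<and> r < 1"
    have "elog (covnum r (ball x s)) \<le> elog (covnum r (ball x t))"
      by (rule elog_mono) (use that r in \<open>auto intro!: covnum_mono_set covnum_ge1\<close>)
    then show "elog (covnum r (ball x s)) / ereal (ln (1 / r)) \<le> elog (covnum r (ball x t)) / ereal (ln (1 / r))"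
      by (rule ereal_divide_right_mono) (use r in simp)
  qed
  have "((\<lambda>R. Liminf (at_right 0) (\<lambda>r. elog (covnum r (ball x R)) / ereal (ln (1 / r)))) \<longlongrightarrow>
     (INF t\<in>{0<..}. Liminf (at_right 0) (\<lambda>r. elog (covnum r (ball x t)) / ereal (ln (1 / r))))) (at_right 0)"
    by (rule mono_tendsto_at_right0) (rule Liminf_mono[OF pt])
  moreover then have "lower_box_dim x = (INF t\<in>{0<..}. Liminf (at_right 0) (\<lambda>r. elog (covnum r (ball x t)) / ereal (ln (1 / r))))"
    unfolding lower_box_dim_def by (rule tendsto_Lim[OF trivial_limit_at_right_real])
  ultimately show "((\<lambda>R. Liminf (at_right 0) (\<lambda>r. elog (covnum r (ball x R)) / ereal (ln (1 / r)))) \<longlongrightarrow> lower_box_dim x) (at_right 0)"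
    by simp
  have "((\<lambda>R. Limsup (at_right 0) (\<lambda>r. elog (covnum r (ball x R)) / ereal (ln (1 / r)))) \<longlongrightarrow>
     (INF t\<in>{0<..}. Limsup (at_right 0) (\<lambda>r. elog (covnum r (ball x t)) / ereal (ln (1 / r))))) (at_right 0)"
    by (rule mono_tendsto_at_right0) (rule Limsup_mono[OF pt])
  moreover then have "upper_box_dim x = (INF t\<in>{0<..}. Limsup (at_right 0) (\<lambda>r. elog (covnum r (ball x t)) / ereal (ln (1 / r))))"
    unfolding upper_box_dim_def by (rule tendsto_Lim[OF trivial_limit_at_right_real])
  ultimately show "((\<lambda>R. Limsup (at_right 0) (\<lambda>r. elog (covnum r (ball x R)) / ereal (ln (1 / r)))) \<longlongrightarrow> upper_box_dim x) (at_right 0)"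
    by simp
qed

lemma ball_cball_le:
  assumes "0 < lam" "lam < 1" "0 < r"
  shows "elog (covnum (lam * r) (ball x r)) / ereal (ln (1 / lam)) \<le> elog (covnum (lam * r) (cball x r)) / ereal (ln (1 / lam))"
proof -
  have "elog (covnum (lam * r) (ball x r)) \<le> elog (covnum (lam * r) (cball x r))"
    by (rule elog_mono) (use assms in \<open>auto intro!: covnum_mono_set covnum_ge1\<close>)
  then show ?thesis by (rule ereal_divide_right_mono) (use assms in simp)
qed

lemma upper_part:
  shows "((\<lambda>lam. Limsup (at_right 0) (\<lambda>r. elog (covnum (lam * r) (ball x r)) / ereal (ln (1 / lam))))
               \<longlongrightarrow> upper_tangential_dim x) (at_right 0)"
    and "upper_box_dim x \<le> upper_tangential_dim x"
proof -
  let ?fu = "\<lambda>lam. Limsup (at_right 0) (\<lambda>r. elog (covnum (lam * r) (ball x r)) / ereal (ln (1 / lam)))"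
  let ?gu = "\<lambda>lam. Limsup (at_right 0) (\<lambda>r. elog (covnum (lam * r) (cball x r)) / ereal (ln (1 / lam)))"
  let ?bu = "\<lambda>R. Limsup (at_right 0) (\<lambda>r. elog (covnum r (ball x R)) / ereal (ln (1 / r)))"
  define Lu where "Lu = Liminf (at_right 0) ?fu"
  have A: "Limsup (at_right 0) ?fu \<le> Lu \<and> Limsup (at_right 0) ?gu \<le> Lu \<and> upper_box_dim x \<le> Lu"
  proof -
    have "Limsup (at_right 0) ?fu \<le> ereal y \<and> Limsup (at_right 0) ?gu \<le> ereal y \<and> upper_box_dim x \<le> ereal y"
      if y: "Lu < ereal y" for y
    proof -
      have "Limsup (at_right 0) ?fu \<le> ereal y + ereal e \<and> Limsup (at_right 0) ?gu \<le> ereal y + ereal e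
          \<and> upper_box_dim x \<le> ereal y + ereal e" if e: "0 < e" for e
      proof -
        note U = FU[OF y[unfolded Lu_def] e]
        have "upper_box_dim x \<le> ereal (y + e)"
          by (rule tendsto_upperbound[OF box_tendsto(2) U(3)]) simp
        then show ?thesis using U(1,2) by simp
      qed
      then show ?thesis by (meson ereal_le_epsilon2)
    qed
    then show ?thesis by (meson ereal_dense_le)
  qed
  have B: "Limsup (at_right 0) ?fu \<le> Limsup (at_right 0) ?gu"
  proof (rule Limsup_mono)
    show "eventually (\<lambda>lam. ?fu lam \<le> ?gu lam) (at_right 0)"
      using ev_lt[of 1]
    proof (rule eventually_mono, simp)
      fix lam :: real assume lam: "0 < lam \<and> lam < 1"
      show "?fu lam \<le> ?gu lam"
        by (rule Limsup_mono) (use ev_lt[of 1] in \<open>rule eventually_mono, use lam ball_cball_le in auto\<close>)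
    qed
  qed
  have C: "Lu \<le> Limsup (at_right 0) ?fu" unfolding Lu_def by (rule Liminf_le_Limsup) simp
  have eq1: "Limsup (at_right 0) ?fu = Lu" using A C by simp
  have eq2: "upper_tangential_dim x = Lu" unfolding upper_tangential_dim_def using A B eq1 by simp
  have "(?fu \<longlongrightarrow> Lu) (at_right 0)"
    by (rule Liminf_eq_Limsup) (use eq1 Lu_def in auto)
  then show "(?fu \<longlongrightarrow> upper_tangential_dim x) (at_right 0)" using eq2 by simp
  show "upper_box_dim x \<le> upper_tangential_dim x" using A eq2 by simp
qed

end

lemma freq_double:
  assumes "frequently P (at_right (0::real))"
  shows "frequently (\<lambda>r. P (2*r)) (at_right 0)"
proof -
  have "filtermap ((*) 2) (at_right (0::real)) = at_right 0"
    using filtermap_times_pos_at_right[of "2::real" 0] by simp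
  then show ?thesis using assms frequently_filtermap[of P "(*) 2" "at_right (0::real)"] by simp
qed

context homx begin

lemma lower_part:
  shows "((\<lambda>lam. Liminf (at_right 0) (\<lambda>r. elog (covnum (lam * r) (ball x r)) / ereal (ln (1 / lam))))
               \<longlongrightarrow> lower_tangential_dim x) (at_right 0)"
    and "lower_tangential_dim x \<le> lower_box_dim x"
proof -
  let ?fl = "\<lambda>lam. Liminf (at_right 0) (\<lambda>r. elog (covnum (lam * r) (ball x r)) / ereal (ln (1 / lam)))"
  let ?gl = "\<lambda>lam. Liminf (at_right 0) (\<lambda>r. elog (covnum (lam * r) (cball x r)) / ereal (ln (1 / lam)))"
  let ?bl = "\<lambda>R. Liminf (at_right 0) (\<lambda>r. elog (covnum r (ball x R)) / ereal (ln (1 / r)))"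
  define Ll where "Ll = Limsup (at_right 0) ?fl"
  have fl0: "0 \<le> Liminf (at_right 0) ?fl"
    by (rule Liminf_bounded) (use ev_lt[of 1] in \<open>rule eventually_mono, use fu_nonneg in auto\<close>)
  have bl0: "0 \<le> lower_box_dim x"
    by (rule tendsto_lowerbound[OF box_tendsto(1)])
       (use ev_lt[of 1] in \<open>rule eventually_mono, use bl_nonneg in auto\<close>)
  have A: "Ll \<le> Liminf (at_right 0) ?fl \<and> Ll \<le> lower_box_dim x"
  proof -
    have "ereal y \<le> Liminf (at_right 0) ?fl \<and> ereal y \<le> lower_box_dim x" if y: "ereal y < Ll" for y
    proof -
      have "ereal y \<le> Liminf (at_right 0) ?fl + ereal e \<and> ereal y \<le> lower_box_dim x + ereal e" if e: "0 < e" for e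
      proof (cases "y \<le> e")
        case True
        have "ereal y \<le> 0 + ereal e" using True by simp
        then show ?thesis using fl0 bl0 by (meson add_right_mono order_trans)
      next
        case False
        have ey: "e < y" using False by simp
        note Lo = FL[OF y[unfolded Ll_def] e ey]
        have "ereal (y - e) \<le> lower_box_dim x"
          by (rule tendsto_lowerbound[OF box_tendsto(1) Lo(2)]) simp
        then have 1: "ereal y \<le> lower_box_dim x + ereal e" by (cases "lower_box_dim x") auto
        have "ereal (y - e) \<le> Liminf (at_right 0) ?fl" using Lo by simp
        then have 2: "ereal y \<le> Liminf (at_right 0) ?fl + ereal e" by (cases "Liminf (at_right 0) ?fl") auto
        show ?thesis using 1 2 by simp
      qed
      then show ?thesis by (meson ereal_le_epsilon2)
    qed
    then show ?thesis by (meson ereal_dense_ge)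
  qed
  have C: "Liminf (at_right 0) ?fl \<le> Ll" unfolding Ll_def by (rule Liminf_le_Limsup) simp
  have eq1: "Liminf (at_right 0) ?fl = Ll" using A C by simp
  have tl: "(?fl \<longlongrightarrow> Ll) (at_right 0)"
    by (rule Liminf_eq_Limsup) (use eq1 Ll_def in auto)
  have Ll0: "0 \<le> Ll" using fl0 eq1 by simp
  have D: "Liminf (at_right 0) ?fl \<le> Liminf (at_right 0) ?gl"
  proof (rule Liminf_mono)
    show "eventually (\<lambda>lam. ?fl lam \<le> ?gl lam) (at_right 0)"
      using ev_lt[of 1]
    proof (rule eventually_mono, simp)
      fix lam :: real assume lam: "0 < lam \<and> lam < 1"
      show "?fl lam \<le> ?gl lam"
        by (rule Liminf_mono) (use ev_lt[of 1] in \<open>rule eventually_mono, use lam ball_cball_le in auto\<close>)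
    qed
  qed
  have E: "Liminf (at_right 0) ?gl \<le> Ll"
  proof (rule ereal_dense_le)
    fix y assume y: "Ll < ereal y"
    have "0 < ereal y" by (rule le_less_trans[OF Ll0 y])
    then have y0: "0 < y" by simp
    have "eventually (\<lambda>lam. ?fl lam < ereal y) (at_right 0)" using order_tendstoD(2)[OF tl y] .
    then obtain b where b: "b > 0" "\<And>lam. 0 < lam \<Longrightarrow> lam < b \<Longrightarrow> ?fl lam < ereal y"
      unfolding eventually_at_right_field by auto
    have "Liminf (at_right 0) ?gl \<le> ereal y + ereal e" if e: "0 < e" for e
    proof -
      have ev: "eventually (\<lambda>l. (0 < ln (1/l) \<and> y * ln 2 / ln (1/l) \<le> e) \<and> 0 < l \<and> l < min 1 b) (at_right 0)"
        by (intro eventually_conj ev_small ev_lt) (use y0 e b in auto)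
      have "eventually (\<lambda>lam. ?gl lam \<le> ereal (y + e)) (at_right 0)"
        using ev
      proof (rule eventually_mono)
        fix lam :: real assume lam: "(0 < ln (1/lam) \<and> y * ln 2 / ln (1/lam) \<le> e) \<and> 0 < lam \<and> lam < min 1 b"
        have l2: "ln (1/(lam/2)) = ln 2 + ln (1/lam)"
        proof -
          have e1: "1/(lam/2) = 2 * (1/lam)" by simp
          show ?thesis unfolding e1 by (rule ln_mult_pos) (use lam in auto)
        qed
        have "0 < ln (2::real)" by simp
        then have pos2: "0 < ln (1/(lam/2))" unfolding l2 using lam by linarith
        have "?fl (lam/2) < ereal y" by (rule b(2)) (use lam in auto)
        then have "frequently (\<lambda>s. elog (covnum (lam/2 * s) (ball x s)) / ereal (ln (1 / (lam/2))) < ereal y) (at_right 0)"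
        proof (rule contrapos_pp)
          assume "\<not> frequently (\<lambda>s. elog (covnum (lam/2 * s) (ball x s)) / ereal (ln (1 / (lam/2))) < ereal y) (at_right 0)"
          then have "eventually (\<lambda>s. ereal y \<le> elog (covnum (lam/2 * s) (ball x s)) / ereal (ln (1 / (lam/2)))) (at_right 0)"
            by (simp add: not_frequently not_less)
          then have "ereal y \<le> ?fl (lam/2)" by (rule Liminf_bounded)
          then show "\<not> ?fl (lam/2) < ereal y" by (simp add: not_less)
        qed
        then have "frequently (\<lambda>s. elog (covnum (lam/2 * s) (ball x s)) \<le> ereal (y * ln (1/(lam/2)))) (at_right 0)"
        proof (rule frequently_elim1)
          fix s assume "elog (covnum (lam/2 * s) (ball x s)) / ereal (ln (1 / (lam/2))) < ereal y"
          then have "elog (covnum (lam/2 * s) (ball x s)) < ereal (ln (1/(lam/2))) * ereal y"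
            using pos2 by (subst (asm) ereal_divide_less_pos) auto
          then show "elog (covnum (lam/2 * s) (ball x s)) \<le> ereal (y * ln (1/(lam/2)))" by (simp add: mult.commute)
        qed
        then have fd: "frequently (\<lambda>r. elog (covnum (lam/2 * (2*r)) (ball x (2*r))) \<le> ereal (y * ln (1/(lam/2)))) (at_right 0)"
          by (rule freq_double)
        then have "frequently (\<lambda>r. 0 < r \<and> elog (covnum (lam/2 * (2*r)) (ball x (2*r))) \<le> ereal (y * ln (1/(lam/2)))) (at_right 0)"
        proof -
          have "eventually (\<lambda>r. 0 < r \<and> r < 1) (at_right (0::real))" by (rule ev_lt) simp
          from frequently_eventually_conj[OF fd this]
          show ?thesis by (rule frequently_elim1) simp
        qed
        then have "frequently (\<lambda>r. elog (covnum (lam * r) (cball x r)) / ereal (ln (1 / lam)) \<le> ereal (y * ln (1/(lam/2)) / ln (1/lam))) (at_right 0)"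
        proof (rule frequently_elim1)
          fix r assume r: "0 < r \<and> elog (covnum (lam/2 * (2*r)) (ball x (2*r))) \<le> ereal (y * ln (1/(lam/2)))"
          have "elog (covnum (lam * r) (cball x r)) \<le> elog (covnum (lam * r) (ball x (2*r)))"
          proof (rule elog_mono)
            show "covnum (lam*r) (cball x r) \<le> covnum (lam*r) (ball x (2*r))"
              by (rule covnum_mono_set[OF cball_sub_ball2]) (use r in simp)
            show "1 \<le> covnum (lam*r) (cball x r)" by (rule covnum_ge1) (use r in auto)
          qed
          also have e2: "lam/2 * (2*r) = lam * r" by simp
          have "elog (covnum (lam * r) (ball x (2*r))) \<le> ereal (y * ln (1/(lam/2)))"
            using conjunct2[OF r] unfolding e2 .
          finally have "elog (covnum (lam * r) (cball x r)) / ereal (ln (1 / lam)) \<le> ereal (y * ln (1/(lam/2))) / ereal (ln (1/lam))"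
            by (rule ereal_divide_right_mono) (use lam in simp)
          then show "elog (covnum (lam * r) (cball x r)) / ereal (ln (1 / lam)) \<le> ereal (y * ln (1/(lam/2)) / ln (1/lam))"
            using lam by simp
        qed
        then have "?gl lam \<le> ereal (y * ln (1/(lam/2)) / ln (1/lam))" by (rule Liminf_le_freq)
        also have "y * ln (1/(lam/2)) / ln (1/lam) = y + y * ln 2 / ln (1/lam)"
        proof -
          have "ln (1/lam) \<noteq> 0" using lam by simp
          then show ?thesis unfolding l2 by (simp add: add_divide_distrib distrib_left)
        qed
        also have "\<dots> \<le> y + e" using lam by simp
        finally show "?gl lam \<le> ereal (y + e)" by simp
      qed
      then have "Liminf (at_right 0) ?gl \<le> ereal (y + e)" by (rule Liminf_le[rotated]) simp
      then show ?thesis by simp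
    qed
    then show "Liminf (at_right 0) ?gl \<le> ereal y" by (meson ereal_le_epsilon2)
  qed
  have eq2: "lower_tangential_dim x = Ll" unfolding lower_tangential_dim_def using D E eq1 by simp
  show "(?fl \<longlongrightarrow> lower_tangential_dim x) (at_right 0)" using tl eq2 by simp
  show "lower_tangential_dim x \<le> lower_box_dim x" using A eq2 by simp
qed

end

lemma ereal_all_le_inf: "(\<And>B::real. ereal B \<le> z) \<Longrightarrow> z = \<infinity>"
proof (cases z)
  case (real v) assume "\<And>B. ereal B \<le> z" then have "ereal (v+1) \<le> z" . then show ?thesis using real by simp
next
  case MInf assume "\<And>B. ereal B \<le> z" then have "ereal 0 \<le> z" . then show ?thesis using MInf by simp
qed simp

context homx begin

lemma condC_iff: "condC x \<longleftrightarrow> upper_tangential_dim x < \<infinity>"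
proof
  assume C: "condC x"
  let ?X = "Limsup (at_right 0) (\<lambda>r. ereal_of_enat (covnum (1/4 * r) (cball x r)))"
  have q0: "(1/4::real) > 0" by simp
  have "?X < \<infinity>" using C[unfolded condC_def, rule_format, OF q0] .
  then have "\<exists>B. ?X < ereal B"
  proof (cases ?X)
    case (real v) then show ?thesis by (intro exI[of _ "v+1"]) simp
  next
    case PInf then show ?thesis using \<open>?X < \<infinity>\<close> by simp
  next
    case MInf then show ?thesis by (intro exI[of _ 0]) simp
  qed
  then obtain B where B: "?X < ereal B" by blast
  have "eventually (\<lambda>r. ereal_of_enat (covnum (1/4 * r) (cball x r)) < ereal B) (at_right 0)"
    by (rule Limsup_lessD[OF B])
  then obtain b where b: "b > 0" "\<And>r. 0 < r \<Longrightarrow> r < b \<Longrightarrow> ereal_of_enat (covnum (1/4 * r) (cball x r)) < ereal B"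
    unfolding eventually_at_right_field by auto
  define r0 where "r0 = min a (b/2)"
  have r0: "0 < r0" "r0 \<le> a" unfolding r0_def using a0 b by auto
  define K where "K = max 1 B"
  have K1: "1 \<le> K" unfolding K_def by simp
  have bnd: "ereal_of_enat (covnum (1/4 * r) (ball x r)) \<le> ereal K" if "0 < r" "r \<le> r0" for r
  proof -
    have "covnum (1/4 * r) (ball x r) \<le> covnum (1/4 * r) (cball x r)" by (rule covnum_mono_set) auto
    then have "ereal_of_enat (covnum (1/4 * r) (ball x r)) \<le> ereal_of_enat (covnum (1/4 * r) (cball x r))" by simp
    also have "\<dots> \<le> ereal B" using b(2)[of r] that r0_def b by (simp add: less_imp_le)
    also have "\<dots> \<le> ereal K" unfolding K_def by simp
    finally show ?thesis .
  qed
  have "upper_tangential_dim x \<le> ereal (ln (c*K) / ln (1/(2*(1/4))))"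
    unfolding upper_tangential_dim_def by (rule UBC(2)[OF _ _ r0 K1 bnd]) auto
  then show "upper_tangential_dim x < \<infinity>" by (rule le_less_trans) simp
next
  assume U: "upper_tangential_dim x < \<infinity>"
  show "condC x"
  proof (rule ccontr)
    assume "\<not> condC x"
    then obtain lam0 where lam0: "lam0 > 0"
      and X: "Limsup (at_right 0) (\<lambda>r. ereal_of_enat (covnum (lam0 * r) (cball x r))) = \<infinity>"
      unfolding condC_def by (auto simp: not_less top_unique)
    have "eventually (\<lambda>lam. 0 < lam \<and> lam < min lam0 1) (at_right 0)" by (rule ev_lt) (use lam0 in simp)
    then have "eventually (\<lambda>lam. \<infinity> \<le> Limsup (at_right 0) (\<lambda>r. elog (covnum (lam * r) (cball x r)) / ereal (ln (1 / lam)))) (at_right 0)"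
    proof (rule eventually_mono)
      fix lam :: real assume lam: "0 < lam \<and> lam < min lam0 1"
      have l0: "0 < ln (1/lam)" using lam by simp
      have "ereal Bv \<le> Limsup (at_right 0) (\<lambda>r. elog (covnum (lam * r) (cball x r)) / ereal (ln (1 / lam)))" for Bv
      proof (rule Limsup_ge_freq)
        define C where "C = exp (Bv * ln (1/lam))"
        have fq: "frequently (\<lambda>r. ereal C < ereal_of_enat (covnum (lam0 * r) (cball x r))) (at_right 0)"
        proof (rule ccontr)
          assume "\<not> frequently (\<lambda>r. ereal C < ereal_of_enat (covnum (lam0 * r) (cball x r))) (at_right 0)"
          then have "eventually (\<lambda>r. ereal_of_enat (covnum (lam0 * r) (cball x r)) \<le> ereal C) (at_right 0)"
            by (simp add: not_frequently not_less)
          then have "Limsup (at_right 0) (\<lambda>r. ereal_of_enat (covnum (lam0 * r) (cball x r))) \<le> ereal C"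
            by (rule Limsup_bounded)
          then show False using X by simp
        qed
        have "eventually (\<lambda>r. 0 < r \<and> r < 1) (at_right (0::real))" by (rule ev_lt) simp
        from frequently_eventually_conj[OF fq this]
        show "frequently (\<lambda>r. ereal Bv \<le> elog (covnum (lam * r) (cball x r)) / ereal (ln (1 / lam))) (at_right 0)"
        proof (rule frequently_elim1)
          fix r assume r: "(0 < r \<and> r < 1) \<and> ereal C < ereal_of_enat (covnum (lam0 * r) (cball x r))"
          have "covnum (lam0 * r) (cball x r) \<le> covnum (lam * r) (cball x r)"
            by (rule covnum_mono_rad) (use r lam in simp)
          then have "ereal_of_enat (covnum (lam0 * r) (cball x r)) \<le> ereal_of_enat (covnum (lam * r) (cball x r))"
            by simp
          then have "ereal C \<le> ereal_of_enat (covnum (lam * r) (cball x r))"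
            by (rule order.trans[OF less_imp_le[OF conjunct2[OF r]]])
          then have "ereal (ln C) \<le> elog (covnum (lam * r) (cball x r))"
            by (rule elog_ge) (simp add: C_def)
          then have "ereal (ln (1/lam)) * ereal Bv \<le> elog (covnum (lam * r) (cball x r))"
            by (simp add: C_def mult.commute)
          then show "ereal Bv \<le> elog (covnum (lam * r) (cball x r)) / ereal (ln (1 / lam))"
            using l0 by (subst ereal_le_divide_pos) auto
        qed
      qed
      then have "Limsup (at_right 0) (\<lambda>r. elog (covnum (lam * r) (cball x r)) / ereal (ln (1 / lam))) = \<infinity>"
        by (rule ereal_all_le_inf)
      then show "\<infinity> \<le> Limsup (at_right 0) (\<lambda>r. elog (covnum (lam * r) (cball x r)) / ereal (ln (1 / lam)))" by simp
    qed
    then have "\<infinity> \<le> upper_tangential_dim x" unfolding upper_tangential_dim_def by (rule le_Limsup[rotated]) simp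
    then show False using U by simp
  qed
qed

lemma main:
  shows "(condC x \<longrightarrow>
            ((\<lambda>lam. Liminf (at_right 0) (\<lambda>r. elog (covnum (lam * r) (ball x r)) / ereal (ln (1 / lam))))
               \<longlongrightarrow> lower_tangential_dim x) (at_right 0)
          \<and> ((\<lambda>lam. Limsup (at_right 0) (\<lambda>r. elog (covnum (lam * r) (ball x r)) / ereal (ln (1 / lam))))
               \<longlongrightarrow> upper_tangential_dim x) (at_right 0))
       \<and> (condC x \<longrightarrow>
            lower_tangential_dim x \<le> lower_box_dim x \<and> lower_box_dim x \<le> upper_box_dim x
            \<and> upper_box_dim x \<le> upper_tangential_dim x)
       \<and> (condC x \<longleftrightarrow> upper_tangential_dim x < \<infinity>)"
proof -
  have "lower_box_dim x \<le> upper_box_dim x"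
    by (rule tendsto_le[OF trivial_limit_at_right_real box_tendsto(2) box_tendsto(1)])
       (simp add: Liminf_le_Limsup)
  then show ?thesis using lower_part upper_part condC_iff by blast
qed

end

theorem proposition4p6:
  fixes x :: "'a::metric_space" and c a :: real
  assumes "c \<ge> 1" and "0 < a" and "a \<le> 1"
    and hom: "\<And>r lam mu y z. 0 < r \<Longrightarrow> r \<le> a \<Longrightarrow> 0 < lam \<Longrightarrow> lam \<le> 1 \<Longrightarrow>
       0 < mu \<Longrightarrow> mu \<le> 1 \<Longrightarrow> y \<in> ball x r \<Longrightarrow> z \<in> ball x r \<Longrightarrow>
       ereal_of_enat (covnum (lam * mu * r) (ball y (lam * r)))
         \<le> ereal c * ereal_of_enat (covnum (lam * mu * r) (ball z (lam * r)))"
  shows "(condC x \<longrightarrow>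
            ((\<lambda>lam. Liminf (at_right 0) (\<lambda>r. elog (covnum (lam * r) (ball x r)) / ereal (ln (1 / lam))))
               \<longlongrightarrow> lower_tangential_dim x) (at_right 0)
          \<and> ((\<lambda>lam. Limsup (at_right 0) (\<lambda>r. elog (covnum (lam * r) (ball x r)) / ereal (ln (1 / lam))))
               \<longlongrightarrow> upper_tangential_dim x) (at_right 0))
       \<and> (condC x \<longrightarrow>
            lower_tangential_dim x \<le> lower_box_dim x \<and> lower_box_dim x \<le> upper_box_dim x
            \<and> upper_box_dim x \<le> upper_tangential_dim x)
       \<and> (condC x \<longleftrightarrow> upper_tangential_dim x < \<infinity>)"
  proof -
  interpret H: homx x c a
    by (rule homx.intro[OF assms(1-3) hom])
  show ?thesis by (rule H.main)
qed

end
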